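(* (i) Let $S$ be a unital nonassociative ring with multiplication $\circ$ which has an associative subring $D$ that is a division algebra, such that $S$ is a free left $D$-module of rank $m$. Suppose that: (1) there is $t\in S$ such that $t^i$, $0\le i<m$, is a basis of $S$ over $D$, where $t^0=1$ and $t^{i+1}=t\circ t^i$; (2) for all $a\in D$, $a\ne0$, there is $a'\in D$, $a'\neq0$, such that $t\circ a=a'\circ t$; (3) for all $a,b,c\in D$, $i+j<m$, $k<m$, we have $[a\circ t^i,b\circ t^j,c\circ t^k]=0$; (4) $t^m=d$ with $d\in D$; (5) the map $\sigma:D\to D$, $\sigma(a)=a'$ (with $\sigma(0)=0$), has order $m$ and fixed set $\{a\in D\mid t\circ a=a\circ t\}$, $D$ is a central simple algebra over its center $F$, and $F_0=F\cap\mathrm{Fix}(\sigma)$ contains a primitive $m$th root of unity $\omega$. Then $S\cong S_f=(D,\sigma,d)$ with $f(t)=t^m-d\in D[t;\sigma]$. (ii) If moreover $S$ is a right division ring and $D$ is a central simple algebra, then $f$ is irreducible and $S$ is a nonassociative cyclic extension of $D$ of degree $m$.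
   Context: $[x,y,z]=(x\circ y)\circ z-x\circ(y\circ z)$ is the associator. $D[t;\sigma]$ is the twisted polynomial ring (polynomials $\sum a_it^i$, $a_i\in D$, multiplication determined by $ta=\sigma(a)t$); $(D,\sigma,d)=S_f$ is the set of polynomials of degree $<m$ with multiplication $g\circ h=$ remainder of $gh$ on right division by $f=t^m-d$. A nonassociative ring $S\ne0$ is a right division ring if right multiplication $x\mapsto x\circ a$ is bijective for every $a\neq0$. $f$ is irreducible if not a unit and not a product of two non-units. Definition: if $A$ is a nonassociative division algebra and $D\subseteq A$ an associative division subalgebra, $A$ is a nonassociative cyclic extension of $D$ of degree $m$ if $A$ is a free left $D$-module of rank $m$ and $\mathrm{Aut}(A)$ has a cyclic subgroup $G$ of order $m$ with $H|_D=\mathrm{id}_D$ for all $H\in G$. *)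

theory Defs
  imports "HOL-Algebra.Ring"
begin

definition nonassoc_ring :: "('a, 'b) ring_scheme \<Rightarrow> bool" where
  "nonassoc_ring R \<longleftrightarrow> abelian_group R \<and>
     (\<forall>x\<in>carrier R. \<forall>y\<in>carrier R. x \<otimes>\<^bsub>R\<^esub> y \<in> carrier R) \<and>
     \<one>\<^bsub>R\<^esub> \<in> carrier R \<and>
     (\<forall>x\<in>carrier R. \<one>\<^bsub>R\<^esub> \<otimes>\<^bsub>R\<^esub> x = x \<and> x \<otimes>\<^bsub>R\<^esub> \<one>\<^bsub>R\<^esub> = x) \<and>
     (\<forall>x\<in>carrier R. \<forall>y\<in>carrier R. \<forall>z\<in>carrier R.
        (x \<oplus>\<^bsub>R\<^esub> y) \<otimes>\<^bsub>R\<^esub> z = (x \<otimes>\<^bsub>R\<^esub> z) \<oplus>\<^bsub>R\<^esub> (y \<otimes>\<^bsub>R\<^esub> z) \<and>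
        z \<otimes>\<^bsub>R\<^esub> (x \<oplus>\<^bsub>R\<^esub> y) = (z \<otimes>\<^bsub>R\<^esub> x) \<oplus>\<^bsub>R\<^esub> (z \<otimes>\<^bsub>R\<^esub> y))"

definition associator :: "('a, 'b) ring_scheme \<Rightarrow> 'a \<Rightarrow> 'a \<Rightarrow> 'a \<Rightarrow> 'a" where
  "associator R x y z = ((x \<otimes>\<^bsub>R\<^esub> y) \<otimes>\<^bsub>R\<^esub> z) \<ominus>\<^bsub>R\<^esub> (x \<otimes>\<^bsub>R\<^esub> (y \<otimes>\<^bsub>R\<^esub> z))"

primrec npow :: "('a, 'b) ring_scheme \<Rightarrow> 'a \<Rightarrow> nat \<Rightarrow> 'a" where
  "npow R t 0 = \<one>\<^bsub>R\<^esub>"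
| "npow R t (Suc i) = t \<otimes>\<^bsub>R\<^esub> npow R t i"

definition assoc_division_subring :: "('a, 'b) ring_scheme \<Rightarrow> 'a set \<Rightarrow> bool" where
  "assoc_division_subring R D \<longleftrightarrow> D \<subseteq> carrier R \<and> \<zero>\<^bsub>R\<^esub> \<in> D \<and> \<one>\<^bsub>R\<^esub> \<in> D \<and>
     \<one>\<^bsub>R\<^esub> \<noteq> \<zero>\<^bsub>R\<^esub> \<and>
     (\<forall>a\<in>D. \<forall>b\<in>D. a \<oplus>\<^bsub>R\<^esub> b \<in> D \<and> a \<otimes>\<^bsub>R\<^esub> b \<in> D) \<and>
     (\<forall>a\<in>D. \<ominus>\<^bsub>R\<^esub> a \<in> D) \<and>
     (\<forall>a\<in>D. \<forall>b\<in>D. \<forall>c\<in>D. (a \<otimes>\<^bsub>R\<^esub> b) \<otimes>\<^bsub>R\<^esub> c = a \<otimes>\<^bsub>R\<^esub> (b \<otimes>\<^bsub>R\<^esub> c)) \<and>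
     (\<forall>a\<in>D. a \<noteq> \<zero>\<^bsub>R\<^esub> \<longrightarrow> (\<exists>b\<in>D. a \<otimes>\<^bsub>R\<^esub> b = \<one>\<^bsub>R\<^esub> \<and> b \<otimes>\<^bsub>R\<^esub> a = \<one>\<^bsub>R\<^esub>))"

definition center_of :: "('a, 'b) ring_scheme \<Rightarrow> 'a set \<Rightarrow> 'a set" where
  "center_of R D = {z \<in> D. \<forall>x\<in>D. z \<otimes>\<^bsub>R\<^esub> x = x \<otimes>\<^bsub>R\<^esub> z}"

definition two_sided_ideal :: "('a, 'b) ring_scheme \<Rightarrow> 'a set \<Rightarrow> 'a set \<Rightarrow> bool" where
  "two_sided_ideal R D I \<longleftrightarrow> I \<subseteq> D \<and> \<zero>\<^bsub>R\<^esub> \<in> I \<and>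
     (\<forall>x\<in>I. \<forall>y\<in>I. x \<oplus>\<^bsub>R\<^esub> y \<in> I) \<and> (\<forall>x\<in>I. \<ominus>\<^bsub>R\<^esub> x \<in> I) \<and>
     (\<forall>a\<in>D. \<forall>x\<in>I. a \<otimes>\<^bsub>R\<^esub> x \<in> I \<and> x \<otimes>\<^bsub>R\<^esub> a \<in> I)"

definition central_simple :: "('a, 'b) ring_scheme \<Rightarrow> 'a set \<Rightarrow> bool" where
  "central_simple R D \<longleftrightarrow>
     (\<forall>I. two_sided_ideal R D I \<longrightarrow> I = {\<zero>\<^bsub>R\<^esub>} \<or> I = D) \<and> D \<noteq> {\<zero>\<^bsub>R\<^esub>} \<and>
     (\<exists>B. finite B \<and> B \<subseteq> D \<and>
        (\<forall>x\<in>D. \<exists>c. (\<forall>b\<in>B. c b \<in> center_of R D) \<and>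
                    x = (\<Oplus>\<^bsub>R\<^esub> b\<in>B. c b \<otimes>\<^bsub>R\<^esub> b)))"

definition left_basis :: "('a, 'b) ring_scheme \<Rightarrow> 'a set \<Rightarrow> (nat \<Rightarrow> 'a) \<Rightarrow> nat \<Rightarrow> bool" where
  "left_basis R D b m \<longleftrightarrow> (\<forall>i<m. b i \<in> carrier R) \<and>
     (\<forall>x\<in>carrier R. \<exists>!c. c \<in> {..<m} \<rightarrow>\<^sub>E D \<and> x = (\<Oplus>\<^bsub>R\<^esub> i\<in>{..<m}. c i \<otimes>\<^bsub>R\<^esub> b i))"

definition free_left_module :: "('a, 'b) ring_scheme \<Rightarrow> 'a set \<Rightarrow> nat \<Rightarrow> bool" where
  "free_left_module R D m \<longleftrightarrow>
     (\<forall>a\<in>D. \<forall>b\<in>D. \<forall>x\<in>carrier R. (a \<otimes>\<^bsub>R\<^esub> b) \<otimes>\<^bsub>R\<^esub> x = a \<otimes>\<^bsub>R\<^esub> (b \<otimes>\<^bsub>R\<^esub> x)) \<and>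
     (\<exists>b. left_basis R D b m)"

definition right_division_ring :: "('a, 'b) ring_scheme \<Rightarrow> bool" where
  "right_division_ring R \<longleftrightarrow> carrier R \<noteq> {\<zero>\<^bsub>R\<^esub>} \<and>
     (\<forall>a\<in>carrier R. a \<noteq> \<zero>\<^bsub>R\<^esub> \<longrightarrow> bij_betw (\<lambda>x. x \<otimes>\<^bsub>R\<^esub> a) (carrier R) (carrier R))"

definition nonassoc_division_ring :: "('a, 'b) ring_scheme \<Rightarrow> bool" where
  "nonassoc_division_ring R \<longleftrightarrow> nonassoc_ring R \<and> carrier R \<noteq> {\<zero>\<^bsub>R\<^esub>} \<and>
     (\<forall>a\<in>carrier R. a \<noteq> \<zero>\<^bsub>R\<^esub> \<longrightarrow>
        bij_betw (\<lambda>x. x \<otimes>\<^bsub>R\<^esub> a) (carrier R) (carrier R) \<and>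
        bij_betw (\<lambda>x. a \<otimes>\<^bsub>R\<^esub> x) (carrier R) (carrier R))"

definition na_iso :: "('a, 'b) ring_scheme \<Rightarrow> ('c, 'd) ring_scheme \<Rightarrow> ('a \<Rightarrow> 'c) \<Rightarrow> bool" where
  "na_iso R S \<phi> \<longleftrightarrow> bij_betw \<phi> (carrier R) (carrier S) \<and> \<phi> \<one>\<^bsub>R\<^esub> = \<one>\<^bsub>S\<^esub> \<and>
     (\<forall>x\<in>carrier R. \<forall>y\<in>carrier R.
        \<phi> (x \<oplus>\<^bsub>R\<^esub> y) = \<phi> x \<oplus>\<^bsub>S\<^esub> \<phi> y \<and> \<phi> (x \<otimes>\<^bsub>R\<^esub> y) = \<phi> x \<otimes>\<^bsub>S\<^esub> \<phi> y)"

definition na_aut :: "('a, 'b) ring_scheme \<Rightarrow> ('a \<Rightarrow> 'a) set" where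
  "na_aut R = {h. h \<in> extensional (carrier R) \<and> na_iso R R h}"

definition nonassoc_cyclic_ext :: "('a, 'b) ring_scheme \<Rightarrow> 'a set \<Rightarrow> nat \<Rightarrow> bool" where
  "nonassoc_cyclic_ext R D m \<longleftrightarrow>
     nonassoc_division_ring R \<and> assoc_division_subring R D \<and> free_left_module R D m \<and>
     (\<exists>G. G \<subseteq> na_aut R \<and> finite G \<and> card G = m \<and>
        (\<exists>g\<in>G. G = {restrict (g ^^ k) (carrier R) | k. True}) \<and>
        (\<forall>H\<in>G. \<forall>a\<in>D. H a = a))"

definition tpolys :: "('a, 'b) ring_scheme \<Rightarrow> 'a set \<Rightarrow> (nat \<Rightarrow> 'a) set" where
  "tpolys R D = {p. (\<forall>i. p i \<in> D) \<and> finite {i. p i \<noteq> \<zero>\<^bsub>R\<^esub>}}"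

definition tp_add :: "('a, 'b) ring_scheme \<Rightarrow> (nat \<Rightarrow> 'a) \<Rightarrow> (nat \<Rightarrow> 'a) \<Rightarrow> nat \<Rightarrow> 'a" where
  "tp_add R p q = (\<lambda>i. p i \<oplus>\<^bsub>R\<^esub> q i)"

text \<open>(a t^i)(b t^j) = a \<sigma>^i(b) t^(i+j).\<close>
definition tp_mult :: "('a, 'b) ring_scheme \<Rightarrow> ('a \<Rightarrow> 'a) \<Rightarrow> (nat \<Rightarrow> 'a) \<Rightarrow> (nat \<Rightarrow> 'a) \<Rightarrow> nat \<Rightarrow> 'a" where
  "tp_mult R \<sigma> p q = (\<lambda>n. \<Oplus>\<^bsub>R\<^esub> i\<in>{..n}. p i \<otimes>\<^bsub>R\<^esub> (\<sigma> ^^ i) (q (n - i)))"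

definition tp_one :: "('a, 'b) ring_scheme \<Rightarrow> nat \<Rightarrow> 'a" where
  "tp_one R = (\<lambda>i. if i = 0 then \<one>\<^bsub>R\<^esub> else \<zero>\<^bsub>R\<^esub>)"

definition tp_unit :: "('a, 'b) ring_scheme \<Rightarrow> 'a set \<Rightarrow> ('a \<Rightarrow> 'a) \<Rightarrow> (nat \<Rightarrow> 'a) \<Rightarrow> bool" where
  "tp_unit R D \<sigma> p \<longleftrightarrow> p \<in> tpolys R D \<and>
     (\<exists>q\<in>tpolys R D. tp_mult R \<sigma> p q = tp_one R \<and> tp_mult R \<sigma> q p = tp_one R)"

definition tp_irreducible :: "('a, 'b) ring_scheme \<Rightarrow> 'a set \<Rightarrow> ('a \<Rightarrow> 'a) \<Rightarrow> (nat \<Rightarrow> 'a) \<Rightarrow> bool" where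
  "tp_irreducible R D \<sigma> f \<longleftrightarrow> f \<in> tpolys R D \<and> \<not> tp_unit R D \<sigma> f \<and>
     \<not> (\<exists>g\<in>tpolys R D. \<exists>h\<in>tpolys R D.
           \<not> tp_unit R D \<sigma> g \<and> \<not> tp_unit R D \<sigma> h \<and> f = tp_mult R \<sigma> g h)"

definition tp_f :: "('a, 'b) ring_scheme \<Rightarrow> nat \<Rightarrow> 'a \<Rightarrow> nat \<Rightarrow> 'a" where
  "tp_f R m d = (\<lambda>i. if i = m then \<one>\<^bsub>R\<^esub> else if i = 0 then \<ominus>\<^bsub>R\<^esub> d else \<zero>\<^bsub>R\<^esub>)"

definition sf_carrier :: "('a, 'b) ring_scheme \<Rightarrow> 'a set \<Rightarrow> nat \<Rightarrow> (nat \<Rightarrow> 'a) set" where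
  "sf_carrier R D m = {p \<in> tpolys R D. \<forall>i\<ge>m. p i = \<zero>\<^bsub>R\<^esub>}"

definition right_rem ::
  "('a, 'b) ring_scheme \<Rightarrow> 'a set \<Rightarrow> ('a \<Rightarrow> 'a) \<Rightarrow> nat \<Rightarrow> (nat \<Rightarrow> 'a) \<Rightarrow> (nat \<Rightarrow> 'a) \<Rightarrow> nat \<Rightarrow> 'a" where
  "right_rem R D \<sigma> m f g = (THE r. r \<in> sf_carrier R D m \<and>
       (\<exists>q\<in>tpolys R D. g = tp_add R (tp_mult R \<sigma> q f) r))"

definition Sf :: "('a, 'b) ring_scheme \<Rightarrow> 'a set \<Rightarrow> ('a \<Rightarrow> 'a) \<Rightarrow> 'a \<Rightarrow> nat \<Rightarrow> (nat \<Rightarrow> 'a) ring" where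
  "Sf R D \<sigma> d m = \<lparr>carrier = sf_carrier R D m,
     mult = (\<lambda>g h. right_rem R D \<sigma> m (tp_f R m d) (tp_mult R \<sigma> g h)),
     one = tp_one R,
     zero = (\<lambda>i. \<zero>\<^bsub>R\<^esub>),
     add = tp_add R\<rparr>"

end

theory Submission
  imports Defs
begin

locale NA =
  fixes S :: "'a ring" (structure) and D :: "'a set" and m :: nat and t d :: 'a
    and \<sigma> :: "'a \<Rightarrow> 'a"
  assumes ring: "nonassoc_ring S"
    and subring: "assoc_division_subring S D"
    and free: "free_left_module S D m"
    and t_in: "t \<in> carrier S"
    and h1: "left_basis S D (npow S t) m"
    and h3: "\<forall>a\<in>D. \<forall>b\<in>D. \<forall>c\<in>D. \<forall>i j k. i + j < m \<and> k < m \<longrightarrow>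
               associator S (a \<otimes> npow S t i) (b \<otimes> npow S t j) (c \<otimes> npow S t k)
                 = \<zero>"
    and d_in: "d \<in> D" and tm: "npow S t m = d"
    and sigma_D: "\<forall>a\<in>D. \<sigma> a \<in> D" and sigma0: "\<sigma> \<zero> = \<zero>"
    and sigma_def: "\<forall>a\<in>D. a \<noteq> \<zero> \<longrightarrow> \<sigma> a \<noteq> \<zero> \<and> t \<otimes> a = \<sigma> a \<otimes> t"
    and sigma_order: "\<forall>a\<in>D. (\<sigma> ^^ m) a = a"

sublocale NA \<subseteq> abelian_group S
  using ring unfolding nonassoc_ring_def by auto

context NA begin

lemma m_closed [intro, simp]: "x \<in> carrier S \<Longrightarrow> y \<in> carrier S \<Longrightarrow> x \<otimes> y \<in> carrier S"
  using ring unfolding nonassoc_ring_def by auto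

lemma one_closed [simp, intro]: "\<one> \<in> carrier S"
  using ring unfolding nonassoc_ring_def by auto

lemma l_one [simp]: "x \<in> carrier S \<Longrightarrow> \<one> \<otimes> x = x"
  using ring unfolding nonassoc_ring_def by auto

lemma r_one [simp]: "x \<in> carrier S \<Longrightarrow> x \<otimes> \<one> = x"
  using ring unfolding nonassoc_ring_def by auto

lemma l_distr: "x \<in> carrier S \<Longrightarrow> y \<in> carrier S \<Longrightarrow> z \<in> carrier S \<Longrightarrow>
   (x \<oplus> y) \<otimes> z = x \<otimes> z \<oplus> y \<otimes> z"
  using ring unfolding nonassoc_ring_def by auto

lemma r_distr: "x \<in> carrier S \<Longrightarrow> y \<in> carrier S \<Longrightarrow> z \<in> carrier S \<Longrightarrow>
   z \<otimes> (x \<oplus> y) = z \<otimes> x \<oplus> z \<otimes> y"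
  using ring unfolding nonassoc_ring_def by auto

lemma l_null [simp]: "x \<in> carrier S \<Longrightarrow> \<zero> \<otimes> x = \<zero>"
proof -
  assume x: "x \<in> carrier S"
  have "(\<zero> \<oplus> \<zero>) \<otimes> x = \<zero> \<otimes> x \<oplus> \<zero> \<otimes> x" by (rule l_distr) (simp_all add: x)
  then have "\<zero> \<otimes> x \<oplus> \<zero> \<otimes> x = \<zero> \<oplus> \<zero> \<otimes> x" using x by simp
  then show ?thesis using x by (meson add.right_cancel m_closed zero_closed)
qed

lemma r_null [simp]: "x \<in> carrier S \<Longrightarrow> x \<otimes> \<zero> = \<zero>"
proof -
  assume x: "x \<in> carrier S"
  have "x \<otimes> (\<zero> \<oplus> \<zero>) = x \<otimes> \<zero> \<oplus> x \<otimes> \<zero>" by (rule r_distr) (simp_all add: x)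
  then have "x \<otimes> \<zero> \<oplus> x \<otimes> \<zero> = \<zero> \<oplus> x \<otimes> \<zero>" using x by simp
  then show ?thesis using x by (meson add.right_cancel m_closed zero_closed)
qed

lemma l_minus: "x \<in> carrier S \<Longrightarrow> y \<in> carrier S \<Longrightarrow> (\<ominus> x) \<otimes> y = \<ominus> (x \<otimes> y)"
proof -
  assume x: "x \<in> carrier S" and y: "y \<in> carrier S"
  have "(\<ominus> x) \<otimes> y \<oplus> x \<otimes> y = \<zero>" using x y l_distr[of "\<ominus> x" x y]
    by (simp add: l_neg)
  then show ?thesis using x y by (metis a_inv_closed add.inv_equality m_closed)
qed

lemma r_minus: "x \<in> carrier S \<Longrightarrow> y \<in> carrier S \<Longrightarrow> x \<otimes> (\<ominus> y) = \<ominus> (x \<otimes> y)"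
proof -
  assume x: "x \<in> carrier S" and y: "y \<in> carrier S"
  have "x \<otimes> (\<ominus> y) \<oplus> x \<otimes> y = \<zero>" using x y r_distr[of "\<ominus> y" y x]
    by (simp add: l_neg)
  then show ?thesis using x y by (metis a_inv_closed add.inv_equality m_closed)
qed

lemma finsum_rdistr:
  assumes "y \<in> carrier S" "f \<in> A \<rightarrow> carrier S"
  shows "(\<Oplus>i\<in>A. f i) \<otimes> y = (\<Oplus>i\<in>A. f i \<otimes> y)"
  using assms(2)
proof (induction A rule: infinite_finite_induct)
  case (infinite A) then show ?case using assms by simp
next
  case empty then show ?case using assms by simp
next
  case (insert a A)
  then have fa: "f a \<in> carrier S" and fA: "f \<in> A \<rightarrow> carrier S" by auto
  have "(\<Oplus>i\<in>insert a A. f i) \<otimes> y = (f a \<oplus> (\<Oplus>i\<in>A. f i)) \<otimes> y"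
    using insert fa fA by simp
  also have "\<dots> = f a \<otimes> y \<oplus> (\<Oplus>i\<in>A. f i \<otimes> y)"
    using l_distr fa fA assms insert by simp
  also have "\<dots> = (\<Oplus>i\<in>insert a A. f i \<otimes> y)"
    using insert fa fA assms by (subst finsum_insert) (auto simp: Pi_def)
  finally show ?case .
qed

lemma finsum_ldistr:
  assumes "y \<in> carrier S" "f \<in> A \<rightarrow> carrier S"
  shows "y \<otimes> (\<Oplus>i\<in>A. f i) = (\<Oplus>i\<in>A. y \<otimes> f i)"
  using assms(2)
proof (induction A rule: infinite_finite_induct)
  case (infinite A) then show ?case using assms by simp
next
  case empty then show ?case using assms by simp
next
  case (insert a A)
  then have fa: "f a \<in> carrier S" and fA: "f \<in> A \<rightarrow> carrier S" by auto
  have "y \<otimes> (\<Oplus>i\<in>insert a A. f i) = y \<otimes> (f a \<oplus> (\<Oplus>i\<in>A. f i))"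
    using insert fa fA by simp
  also have "\<dots> = y \<otimes> f a \<oplus> (\<Oplus>i\<in>A. y \<otimes> f i)"
    using r_distr fa fA assms insert by simp
  also have "\<dots> = (\<Oplus>i\<in>insert a A. y \<otimes> f i)"
    using insert fa fA assms by (subst finsum_insert) (auto simp: Pi_def)
  finally show ?case .
qed

lemma finsum_swap:
  assumes "finite A" "finite B" "\<And>i j. i \<in> A \<Longrightarrow> j \<in> B \<Longrightarrow> f i j \<in> carrier S"
  shows "(\<Oplus>i\<in>A. \<Oplus>j\<in>B. f i j) = (\<Oplus>j\<in>B. \<Oplus>i\<in>A. f i j)"
  using assms
proof (induction A rule: finite_induct)
  case empty then show ?case by (simp add: finsum_zero)
next
  case (insert a A)
  have "(\<Oplus>i\<in>insert a A. \<Oplus>j\<in>B. f i j) = (\<Oplus>j\<in>B. f a j) \<oplus> (\<Oplus>i\<in>A. \<Oplus>j\<in>B. f i j)"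
    using insert by (subst finsum_insert) (auto simp: Pi_def intro!: finsum_closed)
  also have "\<dots> = (\<Oplus>j\<in>B. f a j \<oplus> (\<Oplus>i\<in>A. f i j))"
    using insert by (subst finsum_addf) (auto simp: Pi_def intro!: finsum_closed)
  also have "\<dots> = (\<Oplus>j\<in>B. \<Oplus>i\<in>insert a A. f i j)"
    using insert by (intro finsum_cong') (auto simp: Pi_def intro!: finsum_closed)
  finally show ?case .
qed

lemma finsum_if_eq:
  assumes "finite A" "k \<in> A" "x \<in> carrier S"
  shows "(\<Oplus>i\<in>A. if i = k then x else \<zero>) = x"
proof -
  have "(\<Oplus>i\<in>A. if i = k then x else \<zero>) = (\<Oplus>i\<in>A. if k = i then (\<lambda>_. x) i else \<zero>)"
    by (intro finsum_cong') (auto simp: assms)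
  also have "\<dots> = x" using finsum_singleton[of k A "\<lambda>_. x"] assms by auto
  finally show ?thesis .
qed

lemma finsum_if_notin:
  assumes "k \<notin> A"
  shows "(\<Oplus>i\<in>A. if i = k then x else \<zero>) = \<zero>"
proof -
  have "(\<Oplus>i\<in>A. if i = k then x else \<zero>) = (\<Oplus>i\<in>A. \<zero>)"
    by (intro finsum_cong') (use assms in auto)
  then show ?thesis by (simp add: finsum_zero)
qed

end


context NA begin

abbreviation T :: "nat \<Rightarrow> 'a" where "T i \<equiv> npow S t i"

lemma T_closed [simp, intro]: "T i \<in> carrier S"
  by (induction i) (auto simp: t_in)

lemma T0 [simp]: "T 0 = \<one>" by simp
lemma T1: "T 1 = t" using t_in by simp

lemma minus_eq0: "x \<in> carrier S \<Longrightarrow> y \<in> carrier S \<Longrightarrow> x \<ominus> y = \<zero> \<Longrightarrow> x = y"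
  by (metis a_minus_def add.inv_closed add.inv_equality minus_minus r_neg)

lemma D_sub: "D \<subseteq> carrier S" using subring unfolding assoc_division_subring_def by auto
lemma D_carr [simp, intro]: "a \<in> D \<Longrightarrow> a \<in> carrier S" using D_sub by auto
lemma D_zero [simp, intro]: "\<zero> \<in> D" using subring unfolding assoc_division_subring_def by auto
lemma D_one [simp, intro]: "\<one> \<in> D" using subring unfolding assoc_division_subring_def by auto
lemma one_neq_zero [simp]: "\<one> \<noteq> \<zero>" using subring unfolding assoc_division_subring_def by auto
lemma D_add [simp, intro]: "a \<in> D \<Longrightarrow> b \<in> D \<Longrightarrow> a \<oplus> b \<in> D"
  using subring unfolding assoc_division_subring_def by auto
lemma D_mult [simp, intro]: "a \<in> D \<Longrightarrow> b \<in> D \<Longrightarrow> a \<otimes> b \<in> D"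
  using subring unfolding assoc_division_subring_def by auto
lemma D_neg [simp, intro]: "a \<in> D \<Longrightarrow> \<ominus> a \<in> D"
  using subring unfolding assoc_division_subring_def by auto
lemma D_minus [simp, intro]: "a \<in> D \<Longrightarrow> b \<in> D \<Longrightarrow> a \<ominus> b \<in> D"
  by (simp add: a_minus_def)
lemma D_assoc: "a \<in> D \<Longrightarrow> b \<in> D \<Longrightarrow> c \<in> D \<Longrightarrow> (a \<otimes> b) \<otimes> c = a \<otimes> (b \<otimes> c)"
  using subring unfolding assoc_division_subring_def by auto
lemma D_inv: "a \<in> D \<Longrightarrow> a \<noteq> \<zero> \<Longrightarrow> \<exists>b\<in>D. a \<otimes> b = \<one> \<and> b \<otimes> a = \<one>"
  using subring unfolding assoc_division_subring_def by auto
lemma lmod_assoc: "a \<in> D \<Longrightarrow> b \<in> D \<Longrightarrow> x \<in> carrier S \<Longrightarrow> (a \<otimes> b) \<otimes> x = a \<otimes> (b \<otimes> x)"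
  using free unfolding free_left_module_def by auto

lemma D_finsum [intro]: "f \<in> A \<rightarrow> D \<Longrightarrow> (\<Oplus>i\<in>A. f i) \<in> D"
proof (induction A rule: infinite_finite_induct)
  case (insert a A)
  then have "f \<in> A \<rightarrow> carrier S" "f a \<in> carrier S" using D_sub by auto
  with insert show ?case by (subst finsum_insert) auto
qed auto

lemma D_nozd: "a \<in> D \<Longrightarrow> b \<in> D \<Longrightarrow> a \<otimes> b = \<zero> \<Longrightarrow> a = \<zero> \<or> b = \<zero>"
proof (rule ccontr)
  assume a: "a \<in> D" and b: "b \<in> D" and ab: "a \<otimes> b = \<zero>" and n: "\<not> (a = \<zero> \<or> b = \<zero>)"
  then obtain c where c: "c \<in> D" "c \<otimes> a = \<one>" using D_inv by blast
  have "c \<otimes> (a \<otimes> b) = (c \<otimes> a) \<otimes> b" using D_assoc[OF c(1) a b] by simp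
  also have "\<dots> = b" using c b by simp
  finally have "b = \<zero>" using ab c by simp
  then show False using n by simp
qed

lemma D_cancel_l: "a \<in> D \<Longrightarrow> a \<noteq> \<zero> \<Longrightarrow> b \<in> D \<Longrightarrow> c \<in> D \<Longrightarrow> a \<otimes> b = a \<otimes> c \<Longrightarrow> b = c"
proof -
  assume a: "a \<in> D" "a \<noteq> \<zero>" and b: "b \<in> D" and c: "c \<in> D" and e: "a \<otimes> b = a \<otimes> c"
  have "a \<otimes> (b \<ominus> c) = \<zero>" using e a b c r_distr[of b "\<ominus> c" a] r_minus
    by (simp add: a_minus_def r_neg)
  then have "b \<ominus> c = \<zero>" using D_nozd a b c by blast
  then show ?thesis using minus_eq0 b c by auto
qed

lemma m_pos: "0 < m"
proof (rule ccontr)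
  assume "\<not> 0 < m"
  then have "m = 0" by simp
  moreover have "\<exists>!c. c \<in> {..<m} \<rightarrow>\<^sub>E D \<and> \<one> = (\<Oplus>i\<in>{..<m}. c i \<otimes> T i)"
    using h1 one_closed unfolding left_basis_def by blast
  ultimately have "\<one> = \<zero>" by auto
  then show False by simp
qed

lemma assoc_gen:
  assumes "a \<in> D" "b \<in> D" "c \<in> D" "i + j < m" "k < m"
  shows "((a \<otimes> T i) \<otimes> (b \<otimes> T j)) \<otimes> (c \<otimes> T k) = (a \<otimes> T i) \<otimes> ((b \<otimes> T j) \<otimes> (c \<otimes> T k))"
  using h3 assms minus_eq0 unfolding associator_def by auto

definition ev :: "(nat \<Rightarrow> 'a) \<Rightarrow> 'a" where
  "ev p = (\<Oplus>i\<in>{..<m}. p i \<otimes> T i)"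

lemma ev_closed [simp, intro]: "(\<And>i. i < m \<Longrightarrow> p i \<in> D) \<Longrightarrow> ev p \<in> carrier S"
  unfolding ev_def by (intro finsum_closed) auto

lemma coef_unique:
  assumes "\<And>i. i < m \<Longrightarrow> p i \<in> D" "\<And>i. i < m \<Longrightarrow> q i \<in> D" "ev p = ev q" "i < m"
  shows "p i = q i"
proof -
  let ?x = "ev p"
  have x: "?x \<in> carrier S" using assms by auto
  from h1 x obtain c where uc: "\<And>c'. c' \<in> {..<m} \<rightarrow>\<^sub>E D \<and> ?x = (\<Oplus>i\<in>{..<m}. c' i \<otimes> T i) \<Longrightarrow> c' = c"
    unfolding left_basis_def by metis
  have "restrict p {..<m} \<in> {..<m} \<rightarrow>\<^sub>E D" using assms by auto
  moreover have "?x = (\<Oplus>i\<in>{..<m}. restrict p {..<m} i \<otimes> T i)"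
    unfolding ev_def using assms by (intro finsum_cong') auto
  ultimately have 1: "restrict p {..<m} = c" using uc by blast
  have "restrict q {..<m} \<in> {..<m} \<rightarrow>\<^sub>E D" using assms by auto
  moreover have "ev q = (\<Oplus>i\<in>{..<m}. restrict q {..<m} i \<otimes> T i)"
    unfolding ev_def using assms by (intro finsum_cong') auto
  then have "?x = (\<Oplus>i\<in>{..<m}. restrict q {..<m} i \<otimes> T i)"
    using assms(3) unfolding ev_def by simp
  ultimately have 2: "restrict q {..<m} = c" using uc by blast
  from 1 2 have "restrict p {..<m} i = restrict q {..<m} i" by simp
  then show ?thesis using assms by simp
qed

lemma coef_exists:
  assumes "x \<in> carrier S"
  shows "\<exists>p. (\<forall>i. p i \<in> D) \<and> (\<forall>i\<ge>m. p i = \<zero>) \<and> x = ev p"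
proof -
  from h1 assms obtain c where c: "c \<in> {..<m} \<rightarrow>\<^sub>E D" "x = (\<Oplus>i\<in>{..<m}. c i \<otimes> T i)"
    unfolding left_basis_def by metis
  define p where "p i = (if i < m then c i else \<zero>)" for i
  have "\<forall>i. p i \<in> D" using c unfolding p_def by auto
  moreover have "\<forall>i\<ge>m. p i = \<zero>" unfolding p_def by auto
  moreover have "x = ev p" unfolding c(2) ev_def p_def using c by (intro finsum_cong') (auto simp: PiE_iff)
  ultimately show ?thesis by blast
qed

lemma ev_mono:
  assumes "k < m" "a \<in> D"
  shows "ev (\<lambda>i. if i = k then a else \<zero>) = a \<otimes> T k"
proof -
  have "ev (\<lambda>i. if i = k then a else \<zero>) = (\<Oplus>i\<in>{..<m}. if i = k then a \<otimes> T k else \<zero>)"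
    unfolding ev_def using assms by (intro finsum_cong') auto
  also have "\<dots> = a \<otimes> T k" using assms by (intro finsum_if_eq) auto
  finally show ?thesis .
qed

lemma mono_inj:
  assumes "k < m" "a \<in> D" "b \<in> D" "a \<otimes> T k = b \<otimes> T k"
  shows "a = b"
proof -
  have "ev (\<lambda>i. if i = k then a else \<zero>) = ev (\<lambda>i. if i = k then b else \<zero>)"
    using ev_mono assms by simp
  from coef_unique[OF _ _ this assms(1)] assms show ?thesis by auto
qed

lemma tsig: "a \<in> D \<Longrightarrow> t \<otimes> a = \<sigma> a \<otimes> t"
  using sigma_def sigma0 t_in by (cases "a = \<zero>") auto

lemma sig_D [simp, intro]: "a \<in> D \<Longrightarrow> \<sigma> a \<in> D" using sigma_D by auto

lemma m1_sig: "m = 1 \<Longrightarrow> a \<in> D \<Longrightarrow> \<sigma> a = a"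
  using sigma_order by auto

lemma sig_add: assumes "a \<in> D" "b \<in> D" shows "\<sigma> (a \<oplus> b) = \<sigma> a \<oplus> \<sigma> b"
proof (cases "m = 1")
  case True then show ?thesis using assms m1_sig by auto
next
  case False
  then have m2: "1 < m" using m_pos by linarith
  have "\<sigma> (a \<oplus> b) \<otimes> T 1 = t \<otimes> (a \<oplus> b)" using tsig assms T1 by simp
  also have "\<dots> = t \<otimes> a \<oplus> t \<otimes> b" using r_distr assms t_in by simp
  also have "\<dots> = (\<sigma> a \<oplus> \<sigma> b) \<otimes> T 1" using tsig assms T1 l_distr t_in by simp
  finally show ?thesis using mono_inj[OF m2] assms by auto
qed

lemma sig_one [simp]: "\<sigma> \<one> = \<one>"
proof (cases "m = 1")
  case True then show ?thesis using m1_sig by auto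
next
  case False
  then have m2: "1 < m" using m_pos by linarith
  have "\<sigma> \<one> \<otimes> T 1 = \<one> \<otimes> T 1" using tsig[of \<one>] T1 t_in by simp
  then show ?thesis using mono_inj[OF m2] by auto
qed

lemma sig_neg: assumes "a \<in> D" shows "\<sigma> (\<ominus> a) = \<ominus> \<sigma> a"
proof -
  have "\<sigma> (\<ominus> a) \<oplus> \<sigma> a = \<zero>" using sig_add[of "\<ominus> a" a] assms sigma0 by (simp add: l_neg)
  then show ?thesis using assms by (metis D_carr D_neg add.inv_equality sig_D)
qed

lemma sig_mult: assumes "a \<in> D" "b \<in> D" shows "\<sigma> (a \<otimes> b) = \<sigma> a \<otimes> \<sigma> b"
proof (cases "m = 1")
  case True then show ?thesis using assms m1_sig by auto
next
  case False
  then have m2: "1 < m" using m_pos by linarith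
  have A: "((\<one> \<otimes> T 1) \<otimes> (a \<otimes> T 0)) \<otimes> (b \<otimes> T 0) = (\<one> \<otimes> T 1) \<otimes> ((a \<otimes> T 0) \<otimes> (b \<otimes> T 0))"
    using assms m2 by (intro assoc_gen) auto
  have B: "((\<sigma> a \<otimes> T 0) \<otimes> (\<one> \<otimes> T 1)) \<otimes> (b \<otimes> T 0) = (\<sigma> a \<otimes> T 0) \<otimes> ((\<one> \<otimes> T 1) \<otimes> (b \<otimes> T 0))"
    using assms m2 by (intro assoc_gen) auto
  have "\<sigma> (a \<otimes> b) \<otimes> T 1 = t \<otimes> (a \<otimes> b)" using tsig assms T1 by simp
  also have "\<dots> = (t \<otimes> a) \<otimes> b" using A assms t_in T1 by simp
  also have "\<dots> = (\<sigma> a \<otimes> t) \<otimes> b" using tsig assms by simp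
  also have "\<dots> = \<sigma> a \<otimes> (t \<otimes> b)" using B assms t_in T1 by simp
  also have "\<dots> = \<sigma> a \<otimes> (\<sigma> b \<otimes> t)" using tsig assms by simp
  also have "\<dots> = (\<sigma> a \<otimes> \<sigma> b) \<otimes> T 1" using lmod_assoc assms t_in T1 by simp
  finally show ?thesis using mono_inj[OF m2] assms by auto
qed

lemma sig_nz: "a \<in> D \<Longrightarrow> a \<noteq> \<zero> \<Longrightarrow> \<sigma> a \<noteq> \<zero>" using sigma_def by auto

lemma sigk_D [simp, intro]: "a \<in> D \<Longrightarrow> (\<sigma> ^^ k) a \<in> D"
  by (induction k) auto
lemma sigk_zero [simp]: "(\<sigma> ^^ k) \<zero> = \<zero>"
  by (induction k) (auto simp: sigma0)
lemma sigk_one [simp]: "(\<sigma> ^^ k) \<one> = \<one>"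
  by (induction k) auto
lemma sigk_add: "a \<in> D \<Longrightarrow> b \<in> D \<Longrightarrow> (\<sigma> ^^ k) (a \<oplus> b) = (\<sigma> ^^ k) a \<oplus> (\<sigma> ^^ k) b"
  by (induction k) (auto simp: sig_add)
lemma sigk_neg: "a \<in> D \<Longrightarrow> (\<sigma> ^^ k) (\<ominus> a) = \<ominus> (\<sigma> ^^ k) a"
  by (induction k) (auto simp: sig_neg)
lemma sigk_mult: "a \<in> D \<Longrightarrow> b \<in> D \<Longrightarrow> (\<sigma> ^^ k) (a \<otimes> b) = (\<sigma> ^^ k) a \<otimes> (\<sigma> ^^ k) b"
  by (induction k) (auto simp: sig_mult)
lemma sigk_nz: "a \<in> D \<Longrightarrow> a \<noteq> \<zero> \<Longrightarrow> (\<sigma> ^^ k) a \<noteq> \<zero>"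
  by (induction k) (auto simp: sig_nz)
lemma sigk_comp: "(\<sigma> ^^ i) ((\<sigma> ^^ j) a) = (\<sigma> ^^ (i + j)) a"
  by (simp add: funpow_add)
lemma sigk_m: "a \<in> D \<Longrightarrow> (\<sigma> ^^ m) a = a" using sigma_order by auto
lemma sigk_plus_m: "a \<in> D \<Longrightarrow> (\<sigma> ^^ (k + m)) a = (\<sigma> ^^ k) a"
  by (simp add: funpow_add sigk_m)
lemma sigk_mod: "a \<in> D \<Longrightarrow> (\<sigma> ^^ k) a = (\<sigma> ^^ (k mod m)) a"
proof (induction k rule: less_induct)
  case (less k)
  show ?case
  proof (cases "k < m")
    case True then show ?thesis by simp
  next
    case False
    then have "k = (k - m) + m" by simp
    then have "(\<sigma> ^^ k) a = (\<sigma> ^^ (k - m)) a" using sigk_plus_m less.prems by metis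
    also have "\<dots> = (\<sigma> ^^ ((k - m) mod m)) a" using less m_pos False by auto
    also have "(k - m) mod m = k mod m" using False by (simp add: mod_if)
    finally show ?thesis .
  qed
qed

end


context NA begin

declare t_in [simp]

definition TT :: "nat \<Rightarrow> 'a" where
  "TT n = (if n < m then T n else (\<sigma> ^^ (n - m)) d \<otimes> T (n - m))"

lemma TT_closed [simp, intro]: "TT n \<in> carrier S"
  unfolding TT_def using d_in by auto

lemma Tb: "i < m \<Longrightarrow> b \<in> D \<Longrightarrow> T i \<otimes> b = (\<sigma> ^^ i) b \<otimes> T i"
proof (induction i arbitrary: b)
  case 0 then show ?case by simp
next
  case (Suc i)
  have A: "((\<one> \<otimes> T 1) \<otimes> (\<one> \<otimes> T i)) \<otimes> (b \<otimes> T 0) = (\<one> \<otimes> T 1) \<otimes> ((\<one> \<otimes> T i) \<otimes> (b \<otimes> T 0))"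
    using Suc by (intro assoc_gen) auto
  have B: "((\<one> \<otimes> T 1) \<otimes> ((\<sigma> ^^ i) b \<otimes> T 0)) \<otimes> (\<one> \<otimes> T i) = (\<one> \<otimes> T 1) \<otimes> (((\<sigma> ^^ i) b \<otimes> T 0) \<otimes> (\<one> \<otimes> T i))"
    using Suc by (intro assoc_gen) auto
  have C: "(((\<sigma> ^^ Suc i) b \<otimes> T 0) \<otimes> (\<one> \<otimes> T 1)) \<otimes> (\<one> \<otimes> T i) = ((\<sigma> ^^ Suc i) b \<otimes> T 0) \<otimes> ((\<one> \<otimes> T 1) \<otimes> (\<one> \<otimes> T i))"
    using Suc by (intro assoc_gen) auto
  have "T (Suc i) \<otimes> b = (t \<otimes> T i) \<otimes> b" by simp
  also have "\<dots> = t \<otimes> (T i \<otimes> b)" using A Suc T1 by simp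
  also have "\<dots> = t \<otimes> ((\<sigma> ^^ i) b \<otimes> T i)" using Suc by simp
  also have "\<dots> = (t \<otimes> (\<sigma> ^^ i) b) \<otimes> T i" using B Suc T1 by simp
  also have "\<dots> = ((\<sigma> ^^ Suc i) b \<otimes> t) \<otimes> T i" using tsig Suc by simp
  also have "\<dots> = (\<sigma> ^^ Suc i) b \<otimes> (t \<otimes> T i)" using C Suc T1 by simp
  finally show ?case by simp
qed

lemma tTT:
  assumes "1 < m" "Suc n < 2 * m"
  shows "t \<otimes> TT n = TT (Suc n)"
proof (cases "Suc n < m")
  case True then show ?thesis unfolding TT_def by simp
next
  case False
  show ?thesis
  proof (cases "Suc n = m")
    case True
    then have "n < m" by simp
    have "T (Suc n) = d" using True tm by simp
    then have "t \<otimes> T n = d" by simp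
    then show ?thesis unfolding TT_def using True d_in \<open>n < m\<close> by simp
  next
    case False2: False
    then have nm: "m \<le> n" "n - m < m" "Suc n - m = Suc (n - m)" using False assms by auto
    let ?e = "(\<sigma> ^^ (n - m)) d"
    have e: "?e \<in> D" using d_in by simp
    have B: "((\<one> \<otimes> T 1) \<otimes> (?e \<otimes> T 0)) \<otimes> (\<one> \<otimes> T (n - m)) = (\<one> \<otimes> T 1) \<otimes> ((?e \<otimes> T 0) \<otimes> (\<one> \<otimes> T (n - m)))"
      using nm assms e by (intro assoc_gen) auto
    have C: "((\<sigma> ?e \<otimes> T 0) \<otimes> (\<one> \<otimes> T 1)) \<otimes> (\<one> \<otimes> T (n - m)) = (\<sigma> ?e \<otimes> T 0) \<otimes> ((\<one> \<otimes> T 1) \<otimes> (\<one> \<otimes> T (n - m)))"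
      using nm assms e by (intro assoc_gen) auto
    have "t \<otimes> TT n = t \<otimes> (?e \<otimes> T (n - m))" unfolding TT_def using nm by simp
    also have "\<dots> = (t \<otimes> ?e) \<otimes> T (n - m)" using B e T1 by simp
    also have "\<dots> = (\<sigma> ?e \<otimes> t) \<otimes> T (n - m)" using tsig e by simp
    also have "\<dots> = \<sigma> ?e \<otimes> (t \<otimes> T (n - m))" using C e T1 by simp
    also have "\<dots> = TT (Suc n)" unfolding TT_def using nm False by simp
    finally show ?thesis .
  qed
qed

lemma TTT: "i < m \<Longrightarrow> j < m \<Longrightarrow> T i \<otimes> T j = TT (i + j)"
proof (induction i)
  case 0 then show ?case unfolding TT_def by simp
next
  case (Suc i)
  have A: "((\<one> \<otimes> T 1) \<otimes> (\<one> \<otimes> T i)) \<otimes> (\<one> \<otimes> T j) = (\<one> \<otimes> T 1) \<otimes> ((\<one> \<otimes> T i) \<otimes> (\<one> \<otimes> T j))"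
    using Suc by (intro assoc_gen) auto
  have "T (Suc i) \<otimes> T j = (t \<otimes> T i) \<otimes> T j" by simp
  also have "\<dots> = t \<otimes> (T i \<otimes> T j)" using A T1 by simp
  also have "\<dots> = t \<otimes> TT (i + j)" using Suc by simp
  also have "\<dots> = TT (Suc (i + j))" using Suc by (intro tTT) auto
  finally show ?case by simp
qed

lemma mono_mult0:
  assumes "a \<in> D" "b \<in> D" "i < m" "j < m"
  shows "(a \<otimes> T i) \<otimes> (b \<otimes> T j) = (a \<otimes> (\<sigma> ^^ i) b) \<otimes> (T i \<otimes> T j)"
proof -
  let ?b = "(\<sigma> ^^ i) b"
  have b': "?b \<in> D" using assms by simp
  have A: "((a \<otimes> T 0) \<otimes> (\<one> \<otimes> T i)) \<otimes> (b \<otimes> T j) = (a \<otimes> T 0) \<otimes> ((\<one> \<otimes> T i) \<otimes> (b \<otimes> T j))"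
    using assms by (intro assoc_gen) auto
  have B: "((\<one> \<otimes> T i) \<otimes> (b \<otimes> T 0)) \<otimes> (\<one> \<otimes> T j) = (\<one> \<otimes> T i) \<otimes> ((b \<otimes> T 0) \<otimes> (\<one> \<otimes> T j))"
    using assms by (intro assoc_gen) auto
  have C: "((?b \<otimes> T 0) \<otimes> (\<one> \<otimes> T i)) \<otimes> (\<one> \<otimes> T j) = (?b \<otimes> T 0) \<otimes> ((\<one> \<otimes> T i) \<otimes> (\<one> \<otimes> T j))"
    using assms b' by (intro assoc_gen) auto
  have "(a \<otimes> T i) \<otimes> (b \<otimes> T j) = a \<otimes> (T i \<otimes> (b \<otimes> T j))" using A assms by simp
  also have "T i \<otimes> (b \<otimes> T j) = (T i \<otimes> b) \<otimes> T j" using B assms by simp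
  also have "\<dots> = (?b \<otimes> T i) \<otimes> T j" using Tb assms by simp
  also have "\<dots> = ?b \<otimes> (T i \<otimes> T j)" using C assms b' by simp
  also have "a \<otimes> (?b \<otimes> (T i \<otimes> T j)) = (a \<otimes> ?b) \<otimes> (T i \<otimes> T j)"
    using lmod_assoc assms b' by simp
  finally show ?thesis .
qed

lemma mono_mult:
  assumes "a \<in> D" "b \<in> D" "i < m" "j < m"
  shows "(a \<otimes> T i) \<otimes> (b \<otimes> T j) =
    (if i + j < m then (a \<otimes> (\<sigma> ^^ i) b) \<otimes> T (i + j)
     else ((a \<otimes> (\<sigma> ^^ i) b) \<otimes> (\<sigma> ^^ (i + j - m)) d) \<otimes> T (i + j - m))"
  using mono_mult0[OF assms] TTT[OF assms(3,4)] lmod_assoc assms d_in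
  unfolding TT_def by auto

end


context NA begin

abbreviation f :: "nat \<Rightarrow> 'a" where "f \<equiv> tp_f S m d"

lemma f_D [simp, intro]: "f n \<in> D"
  unfolding tp_f_def using d_in by auto

lemma tp_mult_D [simp, intro]:
  assumes "\<And>i. p i \<in> D" "\<And>i. q i \<in> D"
  shows "tp_mult S \<sigma> p q n \<in> D"
  unfolding tp_mult_def using assms by (intro D_finsum) auto

lemma tpolys_D: "p \<in> tpolys S D \<Longrightarrow> p i \<in> D" unfolding tpolys_def by auto
lemma sf_D: "p \<in> sf_carrier S D m \<Longrightarrow> p i \<in> D" unfolding sf_carrier_def tpolys_def by auto
lemma sf_zero: "p \<in> sf_carrier S D m \<Longrightarrow> m \<le> i \<Longrightarrow> p i = \<zero>" unfolding sf_carrier_def by auto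
lemma sf_carrierI: "(\<And>i. p i \<in> D) \<Longrightarrow> (\<And>i. m \<le> i \<Longrightarrow> p i = \<zero>) \<Longrightarrow> p \<in> sf_carrier S D m"
  unfolding sf_carrier_def tpolys_def
  by (auto intro: finite_subset[of _ "{..<m}"] simp: not_less[symmetric])

lemma tpolysI: "(\<And>i. p i \<in> D) \<Longrightarrow> (\<And>i. N \<le> i \<Longrightarrow> p i = \<zero>) \<Longrightarrow> p \<in> tpolys S D"
  unfolding tpolys_def
  by (auto intro: finite_subset[of _ "{..<N}"] simp: not_less[symmetric])

lemma tpolys_bound: "p \<in> tpolys S D \<Longrightarrow> \<exists>N. \<forall>i\<ge>N. p i = \<zero>"
proof -
  assume "p \<in> tpolys S D"
  then have "finite {i. p i \<noteq> \<zero>}" unfolding tpolys_def by auto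
  then obtain N where "{i. p i \<noteq> \<zero>} \<subseteq> {..<N}" by (auto simp: finite_nat_set_iff_bounded)
  then have "\<forall>i\<ge>N. p i = \<zero>" by (auto simp: subset_iff)
  then show ?thesis by blast
qed

lemma qf_formula:
  assumes q: "\<And>i. q i \<in> D"
  shows "tp_mult S \<sigma> q f n = (if m \<le> n then q (n - m) else \<zero>) \<oplus> \<ominus> (q n \<otimes> (\<sigma> ^^ n) d)"
proof -
  have trm: "q i \<otimes> (\<sigma> ^^ i) (f (n - i)) =
      (if i = n - m \<and> m \<le> n then q (n - m) else \<zero>) \<oplus> (if i = n then \<ominus> (q n \<otimes> (\<sigma> ^^ n) d) else \<zero>)"
    if "i \<in> {..n}" for i
  proof -
    have "i = n \<Longrightarrow> n - i \<noteq> m" using m_pos by auto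
    then show ?thesis using that q d_in m_pos
      unfolding tp_f_def by (auto simp: sigk_neg r_minus)
  qed
  have "tp_mult S \<sigma> q f n = (\<Oplus>i\<in>{..n}. (if i = n - m \<and> m \<le> n then q (n - m) else \<zero>) \<oplus> (if i = n then \<ominus> (q n \<otimes> (\<sigma> ^^ n) d) else \<zero>))"
    unfolding tp_mult_def using trm q d_in by (intro finsum_cong') auto
  also have "\<dots> = (\<Oplus>i\<in>{..n}. (if i = n - m \<and> m \<le> n then q (n - m) else \<zero>)) \<oplus> (\<Oplus>i\<in>{..n}. (if i = n then \<ominus> (q n \<otimes> (\<sigma> ^^ n) d) else \<zero>))"
    using q d_in by (intro finsum_addf) auto
  also have "(\<Oplus>i\<in>{..n}. (if i = n then \<ominus> (q n \<otimes> (\<sigma> ^^ n) d) else \<zero>)) = \<ominus> (q n \<otimes> (\<sigma> ^^ n) d)"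
    using q d_in by (intro finsum_if_eq) auto
  also have "(\<Oplus>i\<in>{..n}. (if i = n - m \<and> m \<le> n then q (n - m) else \<zero>)) = (if m \<le> n then q (n - m) else \<zero>)"
  proof (cases "m \<le> n")
    case True
    then have "(\<Oplus>i\<in>{..n}. (if i = n - m \<and> m \<le> n then q (n - m) else \<zero>)) = (\<Oplus>i\<in>{..n}. (if i = n - m then q (n - m) else \<zero>))"
      by simp
    also have "\<dots> = q (n - m)" using q by (intro finsum_if_eq) auto
    finally show ?thesis using True by simp
  next
    case False then show ?thesis by (simp add: finsum_zero)
  qed
  finally show ?thesis .
qed

lemma qf_D: "(\<And>i. q i \<in> D) \<Longrightarrow> tp_mult S \<sigma> q f n \<in> D"
  by (intro tp_mult_D) auto

lemma rem_unique:
  assumes r: "r \<in> sf_carrier S D m" and r': "r' \<in> sf_carrier S D m"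
    and q: "q \<in> tpolys S D" and q': "q' \<in> tpolys S D"
    and eq: "tp_add S (tp_mult S \<sigma> q f) r = tp_add S (tp_mult S \<sigma> q' f) r'"
  shows "r = r'"
proof -
  have qD: "\<And>i. q i \<in> D" and q'D: "\<And>i. q' i \<in> D" using q q' tpolys_D by auto
  have rD: "\<And>i. r i \<in> D" and r'D: "\<And>i. r' i \<in> D" using r r' sf_D by auto
  obtain N1 where N1: "\<forall>i\<ge>N1. q i = \<zero>" using tpolys_bound q by blast
  obtain N2 where N2: "\<forall>i\<ge>N2. q' i = \<zero>" using tpolys_bound q' by blast
  define N where "N = max N1 N2"
  have pt: "tp_mult S \<sigma> q f n \<oplus> r n = tp_mult S \<sigma> q' f n \<oplus> r' n" for n
    using fun_cong[OF eq, of n] unfolding tp_add_def by simp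
  have rec: "q i = q' i" if "q (i + m) = q' (i + m)" for i
  proof -
    have "tp_mult S \<sigma> q f (i + m) = tp_mult S \<sigma> q' f (i + m)"
      using pt[of "i + m"] sf_zero[OF r] sf_zero[OF r'] qf_D qD q'D by simp
    then have "q i \<oplus> \<ominus> (q (i + m) \<otimes> (\<sigma> ^^ (i + m)) d) = q' i \<oplus> \<ominus> (q (i + m) \<otimes> (\<sigma> ^^ (i + m)) d)"
      using qf_formula[of q "i + m"] qf_formula[of q' "i + m"] qD q'D that by simp
    moreover have "\<ominus> (q (i + m) \<otimes> (\<sigma> ^^ (i + m)) d) \<in> carrier S" using qD d_in by simp
    ultimately show ?thesis using qD q'D add.right_cancel by simp
  qed
  have all: "q i = q' i" for i
  proof (induction "N - i" arbitrary: i rule: less_induct)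
    case less
    show ?case
    proof (cases "N \<le> i")
      case True then show ?thesis using N1 N2 unfolding N_def by auto
    next
      case False
      then have "N - (i + m) < N - i" using m_pos by auto
      then have "q (i + m) = q' (i + m)" using less by blast
      then show ?thesis using rec by blast
    qed
  qed
  then have "q = q'" by auto
  show ?thesis
  proof
    fix n
    have "tp_mult S \<sigma> q f n \<oplus> r n = tp_mult S \<sigma> q f n \<oplus> r' n" using pt \<open>q = q'\<close> by simp
    moreover have "tp_mult S \<sigma> q f n \<in> D" using qD by (intro qf_D)
    ultimately have "r n \<oplus> tp_mult S \<sigma> q f n = r' n \<oplus> tp_mult S \<sigma> q f n" using rD r'D a_comm by simp
    then show "r n = r' n" using rD r'D \<open>tp_mult S \<sigma> q f n \<in> D\<close> add.right_cancel by simp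
  qed
qed

lemma right_rem_eq:
  assumes r: "r \<in> sf_carrier S D m" and q: "q \<in> tpolys S D"
    and g: "g = tp_add S (tp_mult S \<sigma> q f) r"
  shows "right_rem S D \<sigma> m f g = r"
  unfolding right_rem_def
proof (rule the_equality)
  show "r \<in> sf_carrier S D m \<and> (\<exists>q\<in>tpolys S D. g = tp_add S (tp_mult S \<sigma> q f) r)"
    using r q g by blast
next
  fix r' assume "r' \<in> sf_carrier S D m \<and> (\<exists>q\<in>tpolys S D. g = tp_add S (tp_mult S \<sigma> q f) r')"
  then obtain q' where "r' \<in> sf_carrier S D m" "q' \<in> tpolys S D" "g = tp_add S (tp_mult S \<sigma> q' f) r'"
    by blast
  then show "r' = r" using rem_unique[OF _ r _ q] g by metis
qed

definition Rm :: "(nat \<Rightarrow> 'a) \<Rightarrow> nat \<Rightarrow> 'a" where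
  "Rm g n = (if n < m then g n \<oplus> g (n + m) \<otimes> (\<sigma> ^^ n) d else \<zero>)"

lemma prod_zero:
  assumes p: "p \<in> sf_carrier S D m" and q: "q \<in> sf_carrier S D m" and n: "2 * m \<le> Suc n"
  shows "tp_mult S \<sigma> p q n = \<zero>"
proof -
  have "p i \<otimes> (\<sigma> ^^ i) (q (n - i)) = \<zero>" if "i \<in> {..n}" for i
  proof (cases "m \<le> i")
    case True then show ?thesis using sf_zero[OF p] sf_D[OF q] by simp
  next
    case False
    then have "m \<le> n - i" using n by auto
    then show ?thesis using sf_zero[OF q] sf_D[OF p] by simp
  qed
  then have "tp_mult S \<sigma> p q n = (\<Oplus>i\<in>{..n}. \<zero>)" unfolding tp_mult_def by (intro finsum_cong') auto
  then show ?thesis by (simp add: finsum_zero)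
qed

lemma Sf_mult:
  assumes p: "p \<in> sf_carrier S D m" and q: "q \<in> sf_carrier S D m"
  shows "p \<otimes>\<^bsub>Sf S D \<sigma> d m\<^esub> q = Rm (tp_mult S \<sigma> p q)"
proof -
  let ?g = "tp_mult S \<sigma> p q"
  have gD: "\<And>n. ?g n \<in> D" using sf_D p q by auto
  define Q where "Q i = ?g (i + m)" for i
  have QD: "\<And>i. Q i \<in> D" unfolding Q_def using gD by auto
  have Q: "Q \<in> tpolys S D"
    by (rule tpolysI[where N = m]) (use QD prod_zero[OF p q] in \<open>auto simp: Q_def\<close>)
  have R: "Rm ?g \<in> sf_carrier S D m"
    by (rule sf_carrierI) (use gD d_in in \<open>auto simp: Rm_def\<close>)
  have dec: "?g = tp_add S (tp_mult S \<sigma> Q f) (Rm ?g)"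
  proof
    fix n
    show "?g n = tp_add S (tp_mult S \<sigma> Q f) (Rm ?g) n"
    proof (cases "m \<le> n")
      case True
      then have "Q n = \<zero>" unfolding Q_def using prod_zero[OF p q] by simp
      then show ?thesis using True gD QD d_in
        unfolding tp_add_def qf_formula[OF QD] Rm_def by (simp add: Q_def)
    next
      case False
      let ?a = "?g (n + m) \<otimes> (\<sigma> ^^ n) d"
      have a: "?a \<in> carrier S" using gD d_in by simp
      have "\<zero> \<oplus> \<ominus> ?a \<oplus> (?g n \<oplus> ?a) = ?g n"
        using a gD by (simp add: a_lcomm[of "\<ominus> ?a"] l_neg)
      then show ?thesis using False
        unfolding tp_add_def qf_formula[OF QD] Rm_def by (simp add: Q_def)
    qed
  qed
  show ?thesis unfolding Sf_def using right_rem_eq[OF R Q dec] by simp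
qed

lemma Rm_sf: "(\<And>n. g n \<in> D) \<Longrightarrow> Rm g \<in> sf_carrier S D m"
  by (rule sf_carrierI) (use d_in in \<open>auto simp: Rm_def\<close>)

end


context NA begin

lemma ev_add:
  assumes "\<And>i. p i \<in> D" "\<And>i. q i \<in> D"
  shows "ev (tp_add S p q) = ev p \<oplus> ev q"
proof -
  have "ev (tp_add S p q) = (\<Oplus>i\<in>{..<m}. p i \<otimes> T i \<oplus> q i \<otimes> T i)"
    unfolding ev_def tp_add_def using assms by (intro finsum_cong') (auto simp: l_distr)
  also have "\<dots> = ev p \<oplus> ev q" unfolding ev_def using assms by (intro finsum_addf) auto
  finally show ?thesis .
qed

lemma ev_one: "ev (tp_one S) = \<one>"
  unfolding tp_one_def using ev_mono[of 0 "\<one>"] m_pos by simp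

lemma ev_zero: "ev (\<lambda>i. \<zero>) = \<zero>"
  unfolding ev_def by (simp add: finsum_zero)

definition C :: "(nat \<Rightarrow> 'a) \<Rightarrow> (nat \<Rightarrow> 'a) \<Rightarrow> nat \<Rightarrow> nat \<Rightarrow> nat \<Rightarrow> 'a" where
  "C p q i j n = (if i + j = n then p i \<otimes> (\<sigma> ^^ i) (q j) else \<zero>) \<oplus>
     (if i + j = n + m then (p i \<otimes> (\<sigma> ^^ i) (q j)) \<otimes> (\<sigma> ^^ n) d else \<zero>)"

lemma C_D [simp, intro]: "(\<And>i. p i \<in> D) \<Longrightarrow> (\<And>i. q i \<in> D) \<Longrightarrow> C p q i j n \<in> D"
  unfolding C_def using d_in by auto

lemma mono_rep:
  assumes p: "\<And>i. p i \<in> D" and q: "\<And>i. q i \<in> D" and ij: "i < m" "j < m"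
  shows "(p i \<otimes> T i) \<otimes> (q j \<otimes> T j) = (\<Oplus>n\<in>{..<m}. C p q i j n \<otimes> T n)"
proof (cases "i + j < m")
  case True
  let ?Y = "p i \<otimes> (\<sigma> ^^ i) (q j)"
  have Y: "?Y \<in> D" using p q by auto
  have "(\<Oplus>n\<in>{..<m}. C p q i j n \<otimes> T n) = (\<Oplus>n\<in>{..<m}. if n = i + j then ?Y \<otimes> T (i + j) else \<zero>)"
    unfolding C_def using Y True d_in by (intro finsum_cong') auto
  also have "\<dots> = ?Y \<otimes> T (i + j)" using True Y by (intro finsum_if_eq) auto
  finally show ?thesis using mono_mult[OF p q ij] True by simp
next
  case False
  let ?Y = "(p i \<otimes> (\<sigma> ^^ i) (q j)) \<otimes> (\<sigma> ^^ (i + j - m)) d"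
  have Y: "?Y \<in> D" using p q d_in by auto
  have "(\<Oplus>n\<in>{..<m}. C p q i j n \<otimes> T n) = (\<Oplus>n\<in>{..<m}. if n = i + j - m then ?Y \<otimes> T (i + j - m) else \<zero>)"
    unfolding C_def using Y False d_in by (intro finsum_cong') auto
  also have "\<dots> = ?Y \<otimes> T (i + j - m)" using False Y ij by (intro finsum_if_eq) auto
  finally show ?thesis using mono_mult[OF p q ij] False by simp
qed

lemma C_sum_j:
  assumes p: "\<And>i. p i \<in> D" and q: "\<And>i. q i \<in> D" and n: "n < m" and i: "i < m"
  shows "(\<Oplus>j\<in>{..<m}. C p q i j n) =
     (if i \<le> n then p i \<otimes> (\<sigma> ^^ i) (q (n - i)) else \<zero>) \<oplus>
     (if n < i then (p i \<otimes> (\<sigma> ^^ i) (q (n + m - i))) \<otimes> (\<sigma> ^^ n) d else \<zero>)"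
proof -
  let ?A = "\<lambda>j. if j = n - i then (if i \<le> n then p i \<otimes> (\<sigma> ^^ i) (q (n - i)) else \<zero>) else \<zero>"
  let ?B = "\<lambda>j. if j = n + m - i then (if n < i then (p i \<otimes> (\<sigma> ^^ i) (q (n + m - i))) \<otimes> (\<sigma> ^^ n) d else \<zero>) else \<zero>"
  have "(\<Oplus>j\<in>{..<m}. C p q i j n) = (\<Oplus>j\<in>{..<m}. ?A j \<oplus> ?B j)"
    unfolding C_def using p q d_in n i by (intro finsum_cong') auto
  also have "\<dots> = (\<Oplus>j\<in>{..<m}. ?A j) \<oplus> (\<Oplus>j\<in>{..<m}. ?B j)"
    using p q d_in by (intro finsum_addf) auto
  also have "(\<Oplus>j\<in>{..<m}. ?A j) = (if i \<le> n then p i \<otimes> (\<sigma> ^^ i) (q (n - i)) else \<zero>)"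
    using p q n by (intro finsum_if_eq) auto
  also have "(\<Oplus>j\<in>{..<m}. ?B j) = (if n < i then (p i \<otimes> (\<sigma> ^^ i) (q (n + m - i))) \<otimes> (\<sigma> ^^ n) d else \<zero>)"
  proof (cases "n < i")
    case True then show ?thesis using p q d_in n i by (intro finsum_if_eq) auto
  next
    case False
    then have "(\<Oplus>j\<in>{..<m}. ?B j) = (\<Oplus>j\<in>{..<m}. \<zero>)" by (intro finsum_cong') auto
    then show ?thesis using False by (simp add: finsum_zero)
  qed
  finally show ?thesis .
qed

lemma C_sum:
  assumes p: "p \<in> sf_carrier S D m" and q: "q \<in> sf_carrier S D m" and n: "n < m"
  shows "(\<Oplus>i\<in>{..<m}. \<Oplus>j\<in>{..<m}. C p q i j n) = Rm (tp_mult S \<sigma> p q) n"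
proof -
  have pD: "\<And>i. p i \<in> D" and qD: "\<And>i. q i \<in> D" using p q sf_D by auto
  let ?P = "\<lambda>i. p i \<otimes> (\<sigma> ^^ i) (q (n - i))"
  let ?Q = "\<lambda>i. (p i \<otimes> (\<sigma> ^^ i) (q (n + m - i))) \<otimes> (\<sigma> ^^ n) d"
  have "(\<Oplus>i\<in>{..<m}. \<Oplus>j\<in>{..<m}. C p q i j n) =
      (\<Oplus>i\<in>{..<m}. (if i \<le> n then ?P i else \<zero>) \<oplus> (if n < i then ?Q i else \<zero>))"
    using C_sum_j[OF pD qD n] pD qD d_in by (intro finsum_cong') auto
  also have "\<dots> = (\<Oplus>i\<in>{..<m}. (if i \<le> n then ?P i else \<zero>)) \<oplus> (\<Oplus>i\<in>{..<m}. (if n < i then ?Q i else \<zero>))"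
    using pD qD d_in by (intro finsum_addf) auto
  also have "(\<Oplus>i\<in>{..<m}. (if i \<le> n then ?P i else \<zero>)) = tp_mult S \<sigma> p q n"
    unfolding tp_mult_def
    by (rule add.finprod_mono_neutral_cong_right) (use n pD qD in auto)
  also have "(\<Oplus>i\<in>{..<m}. (if n < i then ?Q i else \<zero>)) = (\<Oplus>i\<in>{..n + m}. ?Q i)"
  proof (rule add.finprod_mono_neutral_cong)
    show "\<And>i. i \<in> {..n + m} - {..<m} \<Longrightarrow> ?Q i = \<zero>" using sf_zero[OF p] qD d_in by auto
    show "\<And>i. i \<in> {..<m} - {..n + m} \<Longrightarrow> (if n < i then ?Q i else \<zero>) = \<zero>" by auto
    show "\<And>x. x \<in> {..<m} \<inter> {..n + m} \<Longrightarrow> (if n < x then ?Q x else \<zero>) = ?Q x"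
      using sf_zero[OF q] pD d_in by auto
  qed (use pD qD d_in in auto)
  also have "\<dots> = tp_mult S \<sigma> p q (n + m) \<otimes> (\<sigma> ^^ n) d"
    unfolding tp_mult_def using pD qD d_in by (subst finsum_rdistr) auto
  finally show ?thesis unfolding Rm_def using n by simp
qed

lemma ev_mult:
  assumes p: "p \<in> sf_carrier S D m" and q: "q \<in> sf_carrier S D m"
  shows "ev (Rm (tp_mult S \<sigma> p q)) = ev p \<otimes> ev q"
proof -
  have pD: "\<And>i. p i \<in> D" and qD: "\<And>i. q i \<in> D" using p q sf_D by auto
  have "ev p \<otimes> ev q = (\<Oplus>i\<in>{..<m}. (p i \<otimes> T i) \<otimes> ev q)"
    unfolding ev_def[of p] using pD qD by (subst finsum_rdistr) auto
  also have "\<dots> = (\<Oplus>i\<in>{..<m}. \<Oplus>j\<in>{..<m}. (p i \<otimes> T i) \<otimes> (q j \<otimes> T j))"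
    unfolding ev_def[of q] using pD qD by (intro finsum_cong') (auto simp: finsum_ldistr)
  also have "\<dots> = (\<Oplus>i\<in>{..<m}. \<Oplus>j\<in>{..<m}. \<Oplus>n\<in>{..<m}. C p q i j n \<otimes> T n)"
    using pD qD mono_rep[OF pD qD]
    by (intro finsum_cong') (auto intro!: finsum_cong' finsum_closed)
  also have "\<dots> = (\<Oplus>i\<in>{..<m}. \<Oplus>n\<in>{..<m}. \<Oplus>j\<in>{..<m}. C p q i j n \<otimes> T n)"
    by (rule finsum_cong') (use pD qD in \<open>auto intro!: finsum_swap finsum_closed\<close>)
  also have "\<dots> = (\<Oplus>n\<in>{..<m}. \<Oplus>i\<in>{..<m}. \<Oplus>j\<in>{..<m}. C p q i j n \<otimes> T n)"
    using pD qD by (intro finsum_swap) (auto intro!: finsum_closed)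
  also have "\<dots> = (\<Oplus>n\<in>{..<m}. (\<Oplus>i\<in>{..<m}. \<Oplus>j\<in>{..<m}. C p q i j n) \<otimes> T n)"
    using pD qD by (intro finsum_cong') (auto simp: finsum_rdistr Pi_def intro!: finsum_cong' finsum_closed)
  also have "\<dots> = ev (Rm (tp_mult S \<sigma> p q))"
    unfolding ev_def using C_sum[OF p q] pD qD d_in by (intro finsum_cong') (auto simp: Rm_def)
  finally show ?thesis by simp
qed

end


lemma na_iso_inv:
  assumes iso: "na_iso R R' h"
    and cl: "\<And>x y. x \<in> carrier R \<Longrightarrow> y \<in> carrier R \<Longrightarrow> x \<oplus>\<^bsub>R\<^esub> y \<in> carrier R \<and> x \<otimes>\<^bsub>R\<^esub> y \<in> carrier R"
    and one: "\<one>\<^bsub>R\<^esub> \<in> carrier R"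
  shows "na_iso R' R (inv_into (carrier R) h)"
proof -
  have bij: "bij_betw h (carrier R) (carrier R')" using iso unfolding na_iso_def by auto
  have inj: "inj_on h (carrier R)" using bij bij_betw_def by auto
  have im: "h ` carrier R = carrier R'" using bij by (simp add: bij_betw_def)
  let ?g = "inv_into (carrier R) h"
  have g_in: "\<And>x. x \<in> carrier R' \<Longrightarrow> ?g x \<in> carrier R" using im by (metis inv_into_into)
  have hg: "\<And>x. x \<in> carrier R' \<Longrightarrow> h (?g x) = x" using im by (metis f_inv_into_f)
  have gh: "\<And>a. a \<in> carrier R \<Longrightarrow> ?g (h a) = a" using inj by (metis inv_into_f_f)
  have "bij_betw ?g (carrier R') (carrier R)" using bij by (rule bij_betw_inv_into)
  moreover have "?g \<one>\<^bsub>R'\<^esub> = \<one>\<^bsub>R\<^esub>" using iso gh[OF one] unfolding na_iso_def by auto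
  moreover have "?g (x \<oplus>\<^bsub>R'\<^esub> y) = ?g x \<oplus>\<^bsub>R\<^esub> ?g y \<and> ?g (x \<otimes>\<^bsub>R'\<^esub> y) = ?g x \<otimes>\<^bsub>R\<^esub> ?g y"
    if "x \<in> carrier R'" "y \<in> carrier R'" for x y
  proof -
    have a: "?g x \<in> carrier R" "?g y \<in> carrier R" using g_in that by auto
    have "h (?g x \<oplus>\<^bsub>R\<^esub> ?g y) = x \<oplus>\<^bsub>R'\<^esub> y" "h (?g x \<otimes>\<^bsub>R\<^esub> ?g y) = x \<otimes>\<^bsub>R'\<^esub> y"
      using iso a hg that unfolding na_iso_def by auto
    then show ?thesis using gh cl[OF a] by metis
  qed
  ultimately show ?thesis unfolding na_iso_def by auto
qed

context NA begin

abbreviation SF where "SF \<equiv> Sf S D \<sigma> d m"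

lemma SF_carrier [simp]: "carrier SF = sf_carrier S D m" unfolding Sf_def by simp
lemma SF_one [simp]: "\<one>\<^bsub>SF\<^esub> = tp_one S" unfolding Sf_def by simp
lemma SF_zero [simp]: "\<zero>\<^bsub>SF\<^esub> = (\<lambda>i. \<zero>)" unfolding Sf_def by simp
lemma SF_add [simp]: "x \<oplus>\<^bsub>SF\<^esub> y = tp_add S x y" unfolding Sf_def by simp

lemma tp_one_sf [simp, intro]: "tp_one S \<in> sf_carrier S D m"
  by (rule sf_carrierI) (use m_pos in \<open>auto simp: tp_one_def\<close>)

lemma tp_add_sf [simp, intro]: "p \<in> sf_carrier S D m \<Longrightarrow> q \<in> sf_carrier S D m \<Longrightarrow> tp_add S p q \<in> sf_carrier S D m"
  by (rule sf_carrierI) (auto simp: tp_add_def sf_D sf_zero)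

lemma SF_mult_sf [simp, intro]: "p \<in> sf_carrier S D m \<Longrightarrow> q \<in> sf_carrier S D m \<Longrightarrow> p \<otimes>\<^bsub>SF\<^esub> q \<in> sf_carrier S D m"
  using Sf_mult Rm_sf sf_D by simp

lemma zero_sf [simp, intro]: "(\<lambda>i. \<zero>) \<in> sf_carrier S D m"
  by (rule sf_carrierI) auto

lemma ev_bij: "bij_betw ev (sf_carrier S D m) (carrier S)"
proof -
  have "inj_on ev (sf_carrier S D m)"
  proof
    fix p q assume p: "p \<in> sf_carrier S D m" and q: "q \<in> sf_carrier S D m" and e: "ev p = ev q"
    show "p = q"
    proof
      fix i show "p i = q i"
      proof (cases "i < m")
        case True then show ?thesis using coef_unique[OF _ _ e] p q sf_D by auto
      next
        case False then show ?thesis using sf_zero[OF p] sf_zero[OF q] by simp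
      qed
    qed
  qed
  moreover have "ev ` sf_carrier S D m = carrier S"
  proof
    show "ev ` sf_carrier S D m \<subseteq> carrier S" using sf_D by auto
    show "carrier S \<subseteq> ev ` sf_carrier S D m"
    proof
      fix x assume "x \<in> carrier S"
      then obtain p where "\<forall>i. p i \<in> D" "\<forall>i\<ge>m. p i = \<zero>" "x = ev p" using coef_exists by blast
      moreover then have "p \<in> sf_carrier S D m" by (intro sf_carrierI) auto
      ultimately show "x \<in> ev ` sf_carrier S D m" by blast
    qed
  qed
  ultimately show ?thesis unfolding bij_betw_def by auto
qed

lemma ev_iso: "na_iso SF S ev"
  unfolding na_iso_def
  using ev_bij ev_one ev_add sf_D Sf_mult ev_mult by simp

definition phi where "phi = inv_into (sf_carrier S D m) ev"

lemma phi_iso: "na_iso S SF phi"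
  unfolding phi_def using na_iso_inv[OF ev_iso] by simp

lemma part1: "\<exists>\<phi>. na_iso S SF \<phi>" using phi_iso by blast

lemma phi_in: "x \<in> carrier S \<Longrightarrow> phi x \<in> sf_carrier S D m"
  unfolding phi_def using ev_bij by (metis bij_betw_def inv_into_into)
lemma ev_phi: "x \<in> carrier S \<Longrightarrow> ev (phi x) = x"
  unfolding phi_def using ev_bij by (metis bij_betw_def f_inv_into_f)
lemma phi_ev: "p \<in> sf_carrier S D m \<Longrightarrow> phi (ev p) = p"
  unfolding phi_def using ev_bij by (metis bij_betw_def inv_into_f_f)

end


context NA begin

definition deg :: "(nat \<Rightarrow> 'a) \<Rightarrow> nat" where
  "deg p = Max {i. p i \<noteq> \<zero>}"

lemma deg_props:
  assumes p: "p \<in> tpolys S D" and nz: "p \<noteq> (\<lambda>i. \<zero>)"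
  shows "p (deg p) \<noteq> \<zero>" "\<And>i. deg p < i \<Longrightarrow> p i = \<zero>"
proof -
  have fin: "finite {i. p i \<noteq> \<zero>}" using p unfolding tpolys_def by auto
  have ne: "{i. p i \<noteq> \<zero>} \<noteq> {}" using nz by auto
  show "p (deg p) \<noteq> \<zero>" unfolding deg_def using Max_in[OF fin ne] by auto
  show "\<And>i. deg p < i \<Longrightarrow> p i = \<zero>" unfolding deg_def using Max_ge[OF fin] by force
qed

lemma deg_eqI:
  assumes "p N \<noteq> \<zero>" "\<And>i. N < i \<Longrightarrow> p i = \<zero>"
  shows "deg p = N"
proof -
  have "{i. p i \<noteq> \<zero>} \<subseteq> {..N}" using assms by (auto simp: not_less[symmetric])
  then have fin: "finite {i. p i \<noteq> \<zero>}" by (rule finite_subset) auto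
  show ?thesis unfolding deg_def
    by (rule Max_eqI[OF fin]) (use assms in \<open>auto simp: not_less[symmetric]\<close>)
qed

lemma tp_mult_tpolys:
  assumes p: "p \<in> tpolys S D" and q: "q \<in> tpolys S D"
  shows "tp_mult S \<sigma> p q \<in> tpolys S D"
proof -
  obtain N1 where N1: "\<forall>i\<ge>N1. p i = \<zero>" using tpolys_bound p by blast
  obtain N2 where N2: "\<forall>i\<ge>N2. q i = \<zero>" using tpolys_bound q by blast
  have pD: "\<And>i. p i \<in> D" and qD: "\<And>i. q i \<in> D" using p q tpolys_D by auto
  show ?thesis
  proof (rule tpolysI[where N = "N1 + N2"])
    show "\<And>i. tp_mult S \<sigma> p q i \<in> D" using pD qD by auto
    fix n assume n: "N1 + N2 \<le> n"
    have "p i \<otimes> (\<sigma> ^^ i) (q (n - i)) = \<zero>" if "i \<in> {..n}" for i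
    proof (cases "N1 \<le> i")
      case True then show ?thesis using N1 qD by simp
    next
      case False then have "N2 \<le> n - i" using n by auto
      then show ?thesis using N2 pD by simp
    qed
    then have "tp_mult S \<sigma> p q n = (\<Oplus>i\<in>{..n}. \<zero>)" unfolding tp_mult_def by (intro finsum_cong') auto
    then show "tp_mult S \<sigma> p q n = \<zero>" by (simp add: finsum_zero)
  qed
qed

lemma prod_top:
  assumes p: "p \<in> tpolys S D" and q: "q \<in> tpolys S D"
    and np: "p \<noteq> (\<lambda>i. \<zero>)" and nq: "q \<noteq> (\<lambda>i. \<zero>)"
  shows "tp_mult S \<sigma> p q (deg p + deg q) = p (deg p) \<otimes> (\<sigma> ^^ deg p) (q (deg q))"
    "\<And>n. deg p + deg q < n \<Longrightarrow> tp_mult S \<sigma> p q n = \<zero>"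
    "tp_mult S \<sigma> p q (deg p + deg q) \<noteq> \<zero>"
proof -
  have pD: "\<And>i. p i \<in> D" and qD: "\<And>i. q i \<in> D" using p q tpolys_D by auto
  note dp = deg_props[OF p np] and dq = deg_props[OF q nq]
  let ?N = "deg p" and ?M = "deg q"
  have "tp_mult S \<sigma> p q (?N + ?M) = (\<Oplus>i\<in>{..?N + ?M}. if i = ?N then p ?N \<otimes> (\<sigma> ^^ ?N) (q ?M) else \<zero>)"
    unfolding tp_mult_def
  proof (rule finsum_cong')
    fix i assume "i \<in> {..?N + ?M}"
    show "p i \<otimes> (\<sigma> ^^ i) (q (?N + ?M - i)) = (if i = ?N then p ?N \<otimes> (\<sigma> ^^ ?N) (q ?M) else \<zero>)"
    proof (cases "i < ?N")
      case True then have "?M < ?N + ?M - i" by auto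
      then show ?thesis using dq(2) pD True by simp
    next
      case False then show ?thesis using dp(2)[of i] qD by (cases "i = ?N") auto
    qed
  qed (use pD qD in auto)
  also have "\<dots> = p ?N \<otimes> (\<sigma> ^^ ?N) (q ?M)" using pD qD by (intro finsum_if_eq) auto
  finally show 1: "tp_mult S \<sigma> p q (?N + ?M) = p ?N \<otimes> (\<sigma> ^^ ?N) (q ?M)" .
  show "tp_mult S \<sigma> p q (?N + ?M) \<noteq> \<zero>"
    unfolding 1 using D_nozd[of "p ?N" "(\<sigma> ^^ ?N) (q ?M)"] pD qD dp(1) dq(1) sigk_nz by auto
  fix n assume n: "?N + ?M < n"
  have "p i \<otimes> (\<sigma> ^^ i) (q (n - i)) = \<zero>" if "i \<in> {..n}" for i
  proof (cases "?N < i")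
    case True then show ?thesis using dp(2) qD by simp
  next
    case False then have "?M < n - i" using n by auto
    then show ?thesis using dq(2) pD by simp
  qed
  then have "tp_mult S \<sigma> p q n = (\<Oplus>i\<in>{..n}. \<zero>)" unfolding tp_mult_def by (intro finsum_cong') auto
  then show "tp_mult S \<sigma> p q n = \<zero>" by (simp add: finsum_zero)
qed

lemma prod_deg:
  assumes p: "p \<in> tpolys S D" and q: "q \<in> tpolys S D"
    and np: "p \<noteq> (\<lambda>i. \<zero>)" and nq: "q \<noteq> (\<lambda>i. \<zero>)"
  shows "deg (tp_mult S \<sigma> p q) = deg p + deg q"
  using prod_top[OF assms] by (intro deg_eqI) auto

lemma tp_mult_zero_l: "(\<And>i. q i \<in> D) \<Longrightarrow> tp_mult S \<sigma> (\<lambda>i. \<zero>) q = (\<lambda>i. \<zero>)"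
  unfolding tp_mult_def by (auto simp: finsum_zero)
lemma tp_mult_zero_r: "(\<And>i. p i \<in> D) \<Longrightarrow> tp_mult S \<sigma> p (\<lambda>i. \<zero>) = (\<lambda>i. \<zero>)"
  unfolding tp_mult_def by (auto simp: finsum_zero)

lemma tp_one_nz: "tp_one S \<noteq> (\<lambda>i. \<zero>)"
  unfolding tp_one_def by (metis one_neq_zero)

lemma deg_one: "deg (tp_one S) = 0"
  by (rule deg_eqI) (auto simp: tp_one_def)

lemma unit_deg0:
  assumes "tp_unit S D \<sigma> p"
  shows "deg p = 0" "p \<noteq> (\<lambda>i. \<zero>)"
proof -
  from assms obtain q where p: "p \<in> tpolys S D" and q: "q \<in> tpolys S D" and e: "tp_mult S \<sigma> p q = tp_one S"
    unfolding tp_unit_def by auto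
  have pD: "\<And>i. p i \<in> D" and qD: "\<And>i. q i \<in> D" using p q tpolys_D by auto
  show np: "p \<noteq> (\<lambda>i. \<zero>)" using e tp_mult_zero_l[OF qD] tp_one_nz by auto
  have nq: "q \<noteq> (\<lambda>i. \<zero>)" using e tp_mult_zero_r[OF pD] tp_one_nz by auto
  have "deg p + deg q = 0" using prod_deg[OF p q np nq] e deg_one by simp
  then show "deg p = 0" by simp
qed

lemma const_unit:
  assumes p: "p \<in> tpolys S D" and np: "p \<noteq> (\<lambda>i. \<zero>)" and d0: "deg p = 0"
  shows "tp_unit S D \<sigma> p"
proof -
  have pD: "\<And>i. p i \<in> D" using p tpolys_D by auto
  have p0: "p 0 \<noteq> \<zero>" and pz: "\<And>i. 0 < i \<Longrightarrow> p i = \<zero>" using deg_props[OF p np] d0 by auto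
  obtain b where b: "b \<in> D" "p 0 \<otimes> b = \<one>" "b \<otimes> p 0 = \<one>" using D_inv[OF pD p0] by blast
  define q :: "nat \<Rightarrow> 'a" where "q i = (if i = 0 then b else \<zero>)" for i
  have q: "q \<in> tpolys S D" by (rule tpolysI[where N = 1]) (auto simp: q_def b)
  have qD: "\<And>i. q i \<in> D" using q tpolys_D by auto
  have const_mult: "tp_mult S \<sigma> u v = (\<lambda>n. u 0 \<otimes> v n)"
    if u: "\<And>i. u i \<in> D" "\<And>i. 0 < i \<Longrightarrow> u i = \<zero>" and v: "\<And>i. v i \<in> D" for u v
  proof
    fix n
    have "tp_mult S \<sigma> u v n = (\<Oplus>i\<in>{..n}. if i = 0 then u 0 \<otimes> v n else \<zero>)"
      unfolding tp_mult_def by (rule finsum_cong') (use u v in auto)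
    also have "\<dots> = u 0 \<otimes> v n" using u v by (intro finsum_if_eq) auto
    finally show "tp_mult S \<sigma> u v n = u 0 \<otimes> v n" .
  qed
  have "tp_mult S \<sigma> p q = (\<lambda>n. p 0 \<otimes> q n)" by (rule const_mult) (use pD pz qD in auto)
  then have "tp_mult S \<sigma> p q = tp_one S"
    using b pD[of 0] by (auto simp: q_def tp_one_def)
  moreover have "tp_mult S \<sigma> q p = tp_one S"
  proof -
    have "tp_mult S \<sigma> q p = (\<lambda>n. q 0 \<otimes> p n)" by (rule const_mult) (use qD pD in \<open>auto simp: q_def\<close>)
    then show ?thesis using b pz by (auto simp: q_def tp_one_def)
  qed
  ultimately show ?thesis unfolding tp_unit_def using p q by auto
qed

lemma f_tpolys: "f \<in> tpolys S D"
  by (rule tpolysI[where N = "Suc m"]) (use d_in in \<open>auto simp: tp_f_def\<close>)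

lemma f_nz: "f \<noteq> (\<lambda>i. \<zero>)"
  unfolding tp_f_def by (metis one_neq_zero)

lemma deg_f: "deg f = m"
  by (rule deg_eqI) (auto simp: tp_f_def)

lemma f_not_unit: "\<not> tp_unit S D \<sigma> f"
  using unit_deg0 deg_f m_pos by auto

lemma Rm_f: "Rm f = (\<lambda>i. \<zero>)"
proof
  fix n show "Rm f n = \<zero>"
  proof (cases "n < m")
    case True
    show ?thesis
    proof (cases "n = 0")
      case True then show ?thesis using m_pos d_in unfolding Rm_def tp_f_def by (simp add: l_neg)
    next
      case False then show ?thesis using True m_pos d_in unfolding Rm_def tp_f_def by simp
    qed
  qed (simp add: Rm_def)
qed

end

locale NA2 = NA +
  assumes rdiv: "right_division_ring S"
begin

lemma rmult_inj: "y \<in> carrier S \<Longrightarrow> y \<noteq> \<zero> \<Longrightarrow> x \<in> carrier S \<Longrightarrow> x \<otimes> y = \<zero> \<Longrightarrow> x = \<zero>"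
proof -
  assume y: "y \<in> carrier S" "y \<noteq> \<zero>" and x: "x \<in> carrier S" and e: "x \<otimes> y = \<zero>"
  have "inj_on (\<lambda>x. x \<otimes> y) (carrier S)" using rdiv y unfolding right_division_ring_def bij_betw_def by auto
  moreover have "x \<otimes> y = \<zero> \<otimes> y" using e y by simp
  ultimately show "x = \<zero>" using x by (meson inj_onD zero_closed)
qed

lemma ev_zero_iff: "p \<in> sf_carrier S D m \<Longrightarrow> ev p = \<zero> \<Longrightarrow> p = (\<lambda>i. \<zero>)"
  using ev_bij ev_zero zero_sf by (metis bij_betw_def inj_on_def)

lemma f_irred: "tp_irreducible S D \<sigma> f"
  unfolding tp_irreducible_def
proof (intro conjI f_tpolys f_not_unit notI)
  assume "\<exists>g\<in>tpolys S D. \<exists>h\<in>tpolys S D. \<not> tp_unit S D \<sigma> g \<and> \<not> tp_unit S D \<sigma> h \<and> f = tp_mult S \<sigma> g h"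
  then obtain g h where g: "g \<in> tpolys S D" and h: "h \<in> tpolys S D"
    and ug: "\<not> tp_unit S D \<sigma> g" and uh: "\<not> tp_unit S D \<sigma> h" and fgh: "f = tp_mult S \<sigma> g h" by blast
  have gD: "\<And>i. g i \<in> D" and hD: "\<And>i. h i \<in> D" using g h tpolys_D by auto
  have ng: "g \<noteq> (\<lambda>i. \<zero>)" using fgh f_nz tp_mult_zero_l[OF hD] by auto
  have nh: "h \<noteq> (\<lambda>i. \<zero>)" using fgh f_nz tp_mult_zero_r[OF gD] by auto
  have dsum: "deg g + deg h = m" using prod_deg[OF g h ng nh] fgh deg_f by simp
  have dg: "deg g \<noteq> 0" using const_unit[OF g ng] ug by auto
  have dh: "deg h \<noteq> 0" using const_unit[OF h nh] uh by auto
  have gs: "g \<in> sf_carrier S D m"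
    using deg_props(2)[OF g ng] dsum dh gD by (intro sf_carrierI) auto
  have hs: "h \<in> sf_carrier S D m"
    using deg_props(2)[OF h nh] dsum dg hD by (intro sf_carrierI) auto
  have "g \<otimes>\<^bsub>SF\<^esub> h = (\<lambda>i. \<zero>)" using Sf_mult[OF gs hs] fgh Rm_f by simp
  then have "ev g \<otimes> ev h = \<zero>" using ev_mult[OF gs hs] Sf_mult[OF gs hs] ev_zero by simp
  moreover have "ev h \<noteq> \<zero>" using ev_zero_iff[OF hs] nh by auto
  moreover have "ev g \<noteq> \<zero>" using ev_zero_iff[OF gs] ng by auto
  moreover have "ev g \<in> carrier S" "ev h \<in> carrier S" using gs hs sf_D by auto
  ultimately show False using rmult_inj by blast
qed

end


context NA begin

abbreviation F where "F \<equiv> center_of S D"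

lemma F_D [simp, intro]: "c \<in> F \<Longrightarrow> c \<in> D" unfolding center_of_def by auto
lemma F_comm: "c \<in> F \<Longrightarrow> x \<in> D \<Longrightarrow> c \<otimes> x = x \<otimes> c" unfolding center_of_def by auto
lemma F_zero [simp, intro]: "\<zero> \<in> F" unfolding center_of_def by auto
lemma F_one [simp, intro]: "\<one> \<in> F" unfolding center_of_def by auto
lemma F_add [simp, intro]: "c \<in> F \<Longrightarrow> e \<in> F \<Longrightarrow> c \<oplus> e \<in> F"
  unfolding center_of_def by (auto simp: l_distr r_distr)
lemma F_neg [simp, intro]: "c \<in> F \<Longrightarrow> \<ominus> c \<in> F"
  unfolding center_of_def by (auto simp: l_minus r_minus)
lemma F_minus [simp, intro]: "c \<in> F \<Longrightarrow> e \<in> F \<Longrightarrow> c \<ominus> e \<in> F"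
  by (simp add: a_minus_def)
lemma F_mult [simp, intro]: "c \<in> F \<Longrightarrow> e \<in> F \<Longrightarrow> c \<otimes> e \<in> F"
proof -
  assume c: "c \<in> F" and e: "e \<in> F"
  have cD: "c \<in> D" and eD: "e \<in> D" using c e by auto
  have "(c \<otimes> e) \<otimes> x = x \<otimes> (c \<otimes> e)" if x: "x \<in> D" for x
  proof -
    have "(c \<otimes> e) \<otimes> x = c \<otimes> (e \<otimes> x)" using D_assoc[OF cD eD x] .
    also have "\<dots> = c \<otimes> (x \<otimes> e)" using F_comm[OF e x] by simp
    also have "\<dots> = (c \<otimes> x) \<otimes> e" using D_assoc[OF cD x eD] by simp
    also have "\<dots> = (x \<otimes> c) \<otimes> e" using F_comm[OF c x] by simp
    also have "\<dots> = x \<otimes> (c \<otimes> e)" using D_assoc[OF x cD eD] by simp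
    finally show ?thesis .
  qed
  then show ?thesis using cD eD unfolding center_of_def by auto
qed

lemma F_inv:
  assumes c: "c \<in> F" "c \<noteq> \<zero>"
  shows "\<exists>e\<in>F. c \<otimes> e = \<one> \<and> e \<otimes> c = \<one>"
proof -
  have cD: "c \<in> D" using c by auto
  obtain e where e: "e \<in> D" "c \<otimes> e = \<one>" "e \<otimes> c = \<one>" using D_inv[OF cD c(2)] by blast
  have "e \<otimes> x = x \<otimes> e" if x: "x \<in> D" for x
  proof -
    have ex: "e \<otimes> x \<in> D" using e x by simp
    have "x \<otimes> e = ((e \<otimes> c) \<otimes> x) \<otimes> e" using e x by simp
    also have "(e \<otimes> c) \<otimes> x = e \<otimes> (c \<otimes> x)" using D_assoc[OF e(1) cD x] .
    also have "c \<otimes> x = x \<otimes> c" using F_comm[OF c(1) x] .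
    also have "e \<otimes> (x \<otimes> c) = (e \<otimes> x) \<otimes> c" using D_assoc[OF e(1) x cD] by simp
    also have "((e \<otimes> x) \<otimes> c) \<otimes> e = (e \<otimes> x) \<otimes> (c \<otimes> e)" using D_assoc[OF ex cD e(1)] .
    also have "\<dots> = e \<otimes> x" using e ex by simp
    finally show ?thesis by simp
  qed
  then have "e \<in> F" using e unfolding center_of_def by auto
  then show ?thesis using e by auto
qed

lemma F_comm2: "c \<in> F \<Longrightarrow> e \<in> F \<Longrightarrow> c \<otimes> e = e \<otimes> c" using F_comm by auto

lemma sig_surj: "x \<in> D \<Longrightarrow> \<exists>y\<in>D. x = \<sigma> y"
proof -
  assume x: "x \<in> D"
  have "\<sigma> ((\<sigma> ^^ (m - 1)) x) = (\<sigma> ^^ (Suc (m - 1))) x" by simp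
  also have "Suc (m - 1) = m" using m_pos by simp
  finally show ?thesis using x sigk_m by (metis sigk_D)
qed

lemma sig_F [simp, intro]: "c \<in> F \<Longrightarrow> \<sigma> c \<in> F"
proof -
  assume c: "c \<in> F"
  have "\<sigma> c \<otimes> x = x \<otimes> \<sigma> c" if x: "x \<in> D" for x
  proof -
    obtain y where y: "y \<in> D" "x = \<sigma> y" using sig_surj x by blast
    have "\<sigma> c \<otimes> \<sigma> y = \<sigma> (c \<otimes> y)" using sig_mult c y by auto
    also have "\<dots> = \<sigma> (y \<otimes> c)" using F_comm[OF c y(1)] by simp
    also have "\<dots> = \<sigma> y \<otimes> \<sigma> c" using sig_mult c y by auto
    finally show ?thesis using y by simp
  qed
  then show ?thesis using c unfolding center_of_def by auto
qed

lemma sigk_F [simp, intro]: "c \<in> F \<Longrightarrow> (\<sigma> ^^ k) c \<in> F"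
  by (induction k) auto

definition e0 :: "'a \<Rightarrow> nat \<Rightarrow> 'a" where "e0 c = (\<lambda>i. if i = 0 then c else \<zero>)"

lemma e0_sf [simp, intro]: "c \<in> D \<Longrightarrow> e0 c \<in> sf_carrier S D m"
  by (rule sf_carrierI) (use m_pos in \<open>auto simp: e0_def\<close>)

lemma ev_e0: "c \<in> D \<Longrightarrow> ev (e0 c) = c"
  unfolding e0_def using ev_mono[of 0 c] m_pos by simp

lemma ev_multSF: "p \<in> sf_carrier S D m \<Longrightarrow> q \<in> sf_carrier S D m \<Longrightarrow> ev (p \<otimes>\<^bsub>SF\<^esub> q) = ev p \<otimes> ev q"
  using Sf_mult ev_mult by simp

lemma mult_e0:
  assumes u: "u \<in> sf_carrier S D m" and c: "c \<in> D"
  shows "u \<otimes>\<^bsub>SF\<^esub> e0 c = (\<lambda>n. u n \<otimes> (\<sigma> ^^ n) c)"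
proof -
  have uD: "\<And>i. u i \<in> D" using u sf_D by auto
  have tm: "tp_mult S \<sigma> u (e0 c) = (\<lambda>n. u n \<otimes> (\<sigma> ^^ n) c)"
  proof
    fix n
    have "tp_mult S \<sigma> u (e0 c) n = (\<Oplus>i\<in>{..n}. if i = n then u n \<otimes> (\<sigma> ^^ n) c else \<zero>)"
      unfolding tp_mult_def e0_def by (rule finsum_cong') (use uD c in auto)
    also have "\<dots> = u n \<otimes> (\<sigma> ^^ n) c" using uD c by (intro finsum_if_eq) auto
    finally show "tp_mult S \<sigma> u (e0 c) n = u n \<otimes> (\<sigma> ^^ n) c" .
  qed
  show ?thesis
    unfolding Sf_mult[OF u e0_sf[OF c]] tm
  proof
    fix n show "Rm (\<lambda>n. u n \<otimes> (\<sigma> ^^ n) c) n = u n \<otimes> (\<sigma> ^^ n) c"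
      unfolding Rm_def using sf_zero[OF u] uD c d_in by auto
  qed
qed

lemma nucleus_SF:
  assumes p: "p \<in> sf_carrier S D m" and q: "q \<in> sf_carrier S D m" and c: "c \<in> F"
  shows "(p \<otimes>\<^bsub>SF\<^esub> q) \<otimes>\<^bsub>SF\<^esub> e0 c = p \<otimes>\<^bsub>SF\<^esub> (q \<otimes>\<^bsub>SF\<^esub> e0 c)"
proof -
  have pD: "\<And>i. p i \<in> D" and qD: "\<And>i. q i \<in> D" using p q sf_D by auto
  have cD: "c \<in> D" using c by auto
  let ?g = "tp_mult S \<sigma> p q"
  have gD: "\<And>n. ?g n \<in> D" using pD qD by auto
  have qc: "q \<otimes>\<^bsub>SF\<^esub> e0 c \<in> sf_carrier S D m" using q cD by auto
  have tm: "tp_mult S \<sigma> p (\<lambda>n. q n \<otimes> (\<sigma> ^^ n) c) = (\<lambda>n. ?g n \<otimes> (\<sigma> ^^ n) c)"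
  proof
    fix n
    have "tp_mult S \<sigma> p (\<lambda>n. q n \<otimes> (\<sigma> ^^ n) c) n = (\<Oplus>i\<in>{..n}. (p i \<otimes> (\<sigma> ^^ i) (q (n - i))) \<otimes> (\<sigma> ^^ n) c)"
      unfolding tp_mult_def
    proof (rule finsum_cong')
      fix i assume i: "i \<in> {..n}"
      have "(\<sigma> ^^ i) (q (n - i) \<otimes> (\<sigma> ^^ (n - i)) c) = (\<sigma> ^^ i) (q (n - i)) \<otimes> (\<sigma> ^^ n) c"
        using sigk_mult[of "q (n - i)" "(\<sigma> ^^ (n - i)) c" i] qD cD sigk_comp[of i "n - i" c] i by simp
      then show "p i \<otimes> (\<sigma> ^^ i) (q (n - i) \<otimes> (\<sigma> ^^ (n - i)) c) = p i \<otimes> (\<sigma> ^^ i) (q (n - i)) \<otimes> (\<sigma> ^^ n) c"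
        using D_assoc pD qD cD by simp
    qed (use pD qD cD in auto)
    also have "\<dots> = ?g n \<otimes> (\<sigma> ^^ n) c"
      unfolding tp_mult_def using pD qD cD by (subst finsum_rdistr) auto
    finally show "tp_mult S \<sigma> p (\<lambda>n. q n \<otimes> (\<sigma> ^^ n) c) n = ?g n \<otimes> (\<sigma> ^^ n) c" .
  qed
  have "p \<otimes>\<^bsub>SF\<^esub> (q \<otimes>\<^bsub>SF\<^esub> e0 c) = Rm (\<lambda>n. ?g n \<otimes> (\<sigma> ^^ n) c)"
    using Sf_mult[OF p qc] mult_e0[OF q cD] tm by simp
  also have "\<dots> = (\<lambda>n. Rm ?g n \<otimes> (\<sigma> ^^ n) c)"
  proof
    fix n show "Rm (\<lambda>n. ?g n \<otimes> (\<sigma> ^^ n) c) n = Rm ?g n \<otimes> (\<sigma> ^^ n) c"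
    proof (cases "n < m")
      case True
      let ?c = "(\<sigma> ^^ n) c" and ?d = "(\<sigma> ^^ n) d"
      have cF: "?c \<in> F" using c by simp
      have "(\<sigma> ^^ (n + m)) c = ?c" using sigk_plus_m cD by simp
      then have "Rm (\<lambda>n. ?g n \<otimes> (\<sigma> ^^ n) c) n = ?g n \<otimes> ?c \<oplus> (?g (n + m) \<otimes> ?c) \<otimes> ?d"
        unfolding Rm_def using True by simp
      also have "(?g (n + m) \<otimes> ?c) \<otimes> ?d = (?g (n + m) \<otimes> ?d) \<otimes> ?c"
      proof -
        have "(?g (n + m) \<otimes> ?c) \<otimes> ?d = ?g (n + m) \<otimes> (?c \<otimes> ?d)"
          using D_assoc[of "?g (n + m)" ?c ?d] gD cD d_in by simp
        also have "?c \<otimes> ?d = ?d \<otimes> ?c" using F_comm[OF cF, of ?d] d_in by simp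
        also have "?g (n + m) \<otimes> (?d \<otimes> ?c) = (?g (n + m) \<otimes> ?d) \<otimes> ?c"
          using D_assoc[of "?g (n + m)" ?d ?c] gD cD d_in by simp
        finally show ?thesis .
      qed
      also have "?g n \<otimes> ?c \<oplus> (?g (n + m) \<otimes> ?d) \<otimes> ?c = Rm ?g n \<otimes> ?c"
        unfolding Rm_def using True gD cD d_in by (simp add: l_distr)
      finally show ?thesis .
    qed (simp add: Rm_def cD)
  qed
  also have "\<dots> = (p \<otimes>\<^bsub>SF\<^esub> q) \<otimes>\<^bsub>SF\<^esub> e0 c"
    using mult_e0[OF SF_mult_sf[OF p q] cD] Sf_mult[OF p q] by simp
  finally show ?thesis by simp
qed

lemma nucleus:
  assumes x: "x \<in> carrier S" and y: "y \<in> carrier S" and c: "c \<in> F"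
  shows "(x \<otimes> y) \<otimes> c = x \<otimes> (y \<otimes> c)"
proof -
  have cD: "c \<in> D" using c by auto
  have px: "phi x \<in> sf_carrier S D m" and py: "phi y \<in> sf_carrier S D m" using phi_in x y by auto
  have "(x \<otimes> y) \<otimes> c = ev ((phi x \<otimes>\<^bsub>SF\<^esub> phi y) \<otimes>\<^bsub>SF\<^esub> e0 c)"
    using ev_multSF px py cD ev_phi x y ev_e0 by simp
  also have "\<dots> = ev (phi x \<otimes>\<^bsub>SF\<^esub> (phi y \<otimes>\<^bsub>SF\<^esub> e0 c))" using nucleus_SF px py c by simp
  also have "\<dots> = x \<otimes> (y \<otimes> c)"
    using ev_multSF px py cD ev_phi x y ev_e0 by simp
  finally show ?thesis .
qed

end


lemma na_iso_comp:
  assumes f: "na_iso R1 R2 f" and g: "na_iso R2 R3 g"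
  shows "na_iso R1 R3 (g \<circ> f)"
proof -
  have bf: "bij_betw f (carrier R1) (carrier R2)" using f unfolding na_iso_def by auto
  have bg: "bij_betw g (carrier R2) (carrier R3)" using g unfolding na_iso_def by auto
  have fin: "\<And>x. x \<in> carrier R1 \<Longrightarrow> f x \<in> carrier R2" using bf bij_betwE by blast
  show ?thesis unfolding na_iso_def
    using bij_betw_trans[OF bf bg] f g fin unfolding na_iso_def by auto
qed

lemma na_iso_cong:
  assumes f: "na_iso R R' f" and eq: "\<And>x. x \<in> carrier R \<Longrightarrow> g x = f x"
    and cl: "\<And>x y. x \<in> carrier R \<Longrightarrow> y \<in> carrier R \<Longrightarrow> x \<oplus>\<^bsub>R\<^esub> y \<in> carrier R \<and> x \<otimes>\<^bsub>R\<^esub> y \<in> carrier R"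
    and one: "\<one>\<^bsub>R\<^esub> \<in> carrier R"
  shows "na_iso R R' g"
proof -
  have "bij_betw g (carrier R) (carrier R')" using f eq bij_betw_cong unfolding na_iso_def by metis
  then show ?thesis using f eq cl one unfolding na_iso_def by auto
qed

locale NAW = NA +
  fixes \<omega> :: 'a
  assumes om_F: "\<omega> \<in> center_of S D" and om_fix: "\<sigma> \<omega> = \<omega>"
    and om_m: "npow S \<omega> m = \<one>" and om_prim: "\<forall>k. 0 < k \<and> k < m \<longrightarrow> npow S \<omega> k \<noteq> \<one>"
begin

abbreviation W :: "nat \<Rightarrow> 'a" where "W k \<equiv> npow S \<omega> k"

lemma W_F [simp, intro]: "W k \<in> F"
  by (induction k) (use om_F in auto)
lemma W_D [simp, intro]: "W k \<in> D" using W_F by auto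

lemma W_add: "W (a + b) = W a \<otimes> W b"
proof (induction a)
  case 0 then show ?case by simp
next
  case (Suc a)
  have "W (Suc a + b) = \<omega> \<otimes> (W a \<otimes> W b)" using Suc by simp
  also have "\<dots> = (\<omega> \<otimes> W a) \<otimes> W b" using D_assoc[of \<omega> "W a" "W b"] om_F by auto
  finally show ?case by simp
qed

lemma W_mm: "W (m * q) = \<one>"
proof (induction q)
  case (Suc q)
  have "W (m * Suc q) = W (m + m * q)" by simp
  also have "\<dots> = \<one>" using W_add[of m "m * q"] Suc om_m by simp
  finally show ?case .
qed simp

lemma W_mod: "W k = W (k mod m)"
proof -
  have "W k = W (m * (k div m)) \<otimes> W (k mod m)" using W_add[of "m * (k div m)" "k mod m"] by simp
  then show ?thesis using W_mm[of "k div m"] by simp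
qed

lemma sig_W [simp]: "\<sigma> (W k) = W k"
proof (induction k)
  case (Suc k)
  have "\<sigma> (W (Suc k)) = \<sigma> \<omega> \<otimes> \<sigma> (W k)" using sig_mult[of \<omega> "W k"] om_F by auto
  then show ?case using Suc om_fix by simp
qed simp

lemma sigk_W [simp]: "(\<sigma> ^^ i) (W k) = W k"
  by (induction i) auto

lemma W_nz: "W k \<noteq> \<zero>"
proof
  assume z: "W k = \<zero>"
  have "k \<le> m * k" using m_pos by simp
  then have "W k \<otimes> W (m * k - k) = \<one>" using W_add[of k "m * k - k"] W_mm[of k] by (simp add: mult.commute)
  then show False using z one_neq_zero by (metis D_carr W_D l_null)
qed

lemma W_inj: "k < m \<Longrightarrow> l < m \<Longrightarrow> W k = W l \<Longrightarrow> k = l"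
proof -
  have *: "k = l" if kl: "k < l" "l < m" "W k = W l" for k l
  proof -
    have "W k \<otimes> W (l - k) = W k \<otimes> \<one>" using W_add[of k "l - k"] kl by simp
    then have "W (l - k) = \<one>" using D_cancel_l[of "W k" "W (l - k)" \<one>] W_nz by simp
    then show ?thesis using om_prim kl by auto
  qed
  assume "k < m" "l < m" "W k = W l"
  then show "k = l" using *[of k l] *[of l k] by (cases "k < l"; cases "l < k") auto
qed

definition hk :: "nat \<Rightarrow> (nat \<Rightarrow> 'a) \<Rightarrow> nat \<Rightarrow> 'a" where
  "hk k p = (\<lambda>i. p i \<otimes> W (k * i))"

lemma hk_sf [simp, intro]: "p \<in> sf_carrier S D m \<Longrightarrow> hk k p \<in> sf_carrier S D m"
  by (rule sf_carrierI) (auto simp: hk_def sf_D sf_zero)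

lemma hk_comp: "p \<in> sf_carrier S D m \<Longrightarrow> hk k (hk j p) = hk (k + j) p"
proof
  fix i assume p: "p \<in> sf_carrier S D m"
  have "(p i \<otimes> W (j * i)) \<otimes> W (k * i) = p i \<otimes> (W (j * i) \<otimes> W (k * i))"
    using D_assoc[of "p i" "W (j * i)" "W (k * i)"] sf_D[OF p] by simp
  also have "W (j * i) \<otimes> W (k * i) = W ((k + j) * i)" using W_add[of "j * i" "k * i"]
    by (simp add: algebra_simps)
  finally show "hk k (hk j p) i = hk (k + j) p i" unfolding hk_def .
qed

lemma hk_0: "p \<in> sf_carrier S D m \<Longrightarrow> hk 0 p = p"
  unfolding hk_def using sf_D by auto

lemma hk_mod: "hk k p = hk (k mod m) p"
proof
  fix i
  have "W (k * i) = W ((k mod m) * i)"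
    using W_mod[of "k * i"] W_mod[of "(k mod m) * i"] by (simp add: mod_mult_left_eq)
  then show "hk k p i = hk (k mod m) p i" unfolding hk_def by simp
qed

lemma hk_inv: "p \<in> sf_carrier S D m \<Longrightarrow> hk (m * k - k) (hk k p) = p"
proof -
  assume p: "p \<in> sf_carrier S D m"
  have "k \<le> m * k" using m_pos by simp
  then have "hk (m * k - k) (hk k p) = hk (m * k) p" using hk_comp[OF p] by simp
  also have "\<dots> = hk 0 p" using hk_mod[of "m * k"] by simp
  also have "\<dots> = p" using hk_0 p by simp
  finally show ?thesis .
qed

lemma hk_inv2: "p \<in> sf_carrier S D m \<Longrightarrow> hk k (hk (m * k - k) p) = p"
proof -
  assume p: "p \<in> sf_carrier S D m"
  have "k \<le> m * k" using m_pos by simp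
  then have "hk k (hk (m * k - k) p) = hk (m * k) p" using hk_comp[OF p] by simp
  also have "\<dots> = hk 0 p" using hk_mod[of "m * k"] by simp
  also have "\<dots> = p" using hk_0 p by simp
  finally show ?thesis .
qed

lemma hk_bij: "bij_betw (hk k) (sf_carrier S D m) (sf_carrier S D m)"
  by (rule bij_betw_byWitness[where f' = "hk (m * k - k)"])
    (auto simp: hk_inv hk_inv2)

lemma hk_add: "p \<in> sf_carrier S D m \<Longrightarrow> q \<in> sf_carrier S D m \<Longrightarrow> hk k (tp_add S p q) = tp_add S (hk k p) (hk k q)"
  unfolding hk_def tp_add_def by (auto simp: l_distr sf_D)

lemma hk_one: "hk k (tp_one S) = tp_one S"
  unfolding hk_def tp_one_def by auto

lemma hk_e0: "a \<in> D \<Longrightarrow> hk k (e0 a) = e0 a"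
  unfolding hk_def e0_def by auto

lemma hk_mult:
  assumes p: "p \<in> sf_carrier S D m" and q: "q \<in> sf_carrier S D m"
  shows "hk k (p \<otimes>\<^bsub>SF\<^esub> q) = hk k p \<otimes>\<^bsub>SF\<^esub> hk k q"
proof -
  have pD: "\<And>i. p i \<in> D" and qD: "\<And>i. q i \<in> D" using p q sf_D by auto
  let ?g = "tp_mult S \<sigma> p q"
  have gD: "\<And>n. ?g n \<in> D" using pD qD by auto
  have tm: "tp_mult S \<sigma> (hk k p) (hk k q) = (\<lambda>n. ?g n \<otimes> W (k * n))"
  proof
    fix n
    have "tp_mult S \<sigma> (hk k p) (hk k q) n = (\<Oplus>i\<in>{..n}. (p i \<otimes> (\<sigma> ^^ i) (q (n - i))) \<otimes> W (k * n))"
      unfolding tp_mult_def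
    proof (rule finsum_cong')
      fix i assume i: "i \<in> {..n}"
      let ?a = "p i" and ?b = "(\<sigma> ^^ i) (q (n - i))" and ?w1 = "W (k * i)" and ?w2 = "W (k * (n - i))"
      have ab: "?a \<in> D" "?b \<in> D" using pD qD by auto
      have w: "?w1 \<in> F" "?w2 \<in> F" by auto
      have "(\<sigma> ^^ i) (q (n - i) \<otimes> ?w2) = ?b \<otimes> ?w2" using sigk_mult[of "q (n - i)" ?w2 i] qD by simp
      moreover have "(?a \<otimes> ?w1) \<otimes> (?b \<otimes> ?w2) = (?a \<otimes> ?b) \<otimes> (?w1 \<otimes> ?w2)"
      proof -
        have "(?a \<otimes> ?w1) \<otimes> (?b \<otimes> ?w2) = ?a \<otimes> (?w1 \<otimes> (?b \<otimes> ?w2))" using D_assoc ab w by auto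
        also have "?w1 \<otimes> (?b \<otimes> ?w2) = (?w1 \<otimes> ?b) \<otimes> ?w2" using D_assoc ab w by auto
        also have "?w1 \<otimes> ?b = ?b \<otimes> ?w1" using F_comm w ab by auto
        also have "(?b \<otimes> ?w1) \<otimes> ?w2 = ?b \<otimes> (?w1 \<otimes> ?w2)" using D_assoc ab w by auto
        also have "?a \<otimes> (?b \<otimes> (?w1 \<otimes> ?w2)) = (?a \<otimes> ?b) \<otimes> (?w1 \<otimes> ?w2)" using D_assoc ab w by auto
        finally show ?thesis .
      qed
      moreover have "?w1 \<otimes> ?w2 = W (k * n)" using W_add[of "k * i" "k * (n - i)"] i
        by (simp add: algebra_simps)
      ultimately show "hk k p i \<otimes> (\<sigma> ^^ i) (hk k q (n - i)) = (?a \<otimes> ?b) \<otimes> W (k * n)"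
        unfolding hk_def by simp
    qed (use pD qD in auto)
    also have "\<dots> = ?g n \<otimes> W (k * n)"
      unfolding tp_mult_def using pD qD by (subst finsum_rdistr) auto
    finally show "tp_mult S \<sigma> (hk k p) (hk k q) n = ?g n \<otimes> W (k * n)" .
  qed
  have "hk k p \<otimes>\<^bsub>SF\<^esub> hk k q = Rm (\<lambda>n. ?g n \<otimes> W (k * n))"
    using Sf_mult[OF hk_sf[OF p] hk_sf[OF q]] tm by simp
  also have "\<dots> = hk k (Rm ?g)"
  proof
    fix n show "Rm (\<lambda>n. ?g n \<otimes> W (k * n)) n = hk k (Rm ?g) n"
    proof (cases "n < m")
      case True
      let ?w = "W (k * n)" and ?d = "(\<sigma> ^^ n) d"
      have wF: "?w \<in> F" by simp
      have dD: "?d \<in> D" using d_in by simp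
      have "W (k * (n + m)) = ?w" using W_add[of "k * n" "k * m"] W_mm[of k]
        by (simp add: algebra_simps)
      then have "Rm (\<lambda>n. ?g n \<otimes> W (k * n)) n = ?g n \<otimes> ?w \<oplus> (?g (n + m) \<otimes> ?w) \<otimes> ?d"
        unfolding Rm_def using True by simp
      also have "(?g (n + m) \<otimes> ?w) \<otimes> ?d = (?g (n + m) \<otimes> ?d) \<otimes> ?w"
      proof -
        have "(?g (n + m) \<otimes> ?w) \<otimes> ?d = ?g (n + m) \<otimes> (?w \<otimes> ?d)"
          using D_assoc[of "?g (n + m)" ?w ?d] gD dD by simp
        also have "?w \<otimes> ?d = ?d \<otimes> ?w" using F_comm[OF wF dD] .
        also have "?g (n + m) \<otimes> (?d \<otimes> ?w) = (?g (n + m) \<otimes> ?d) \<otimes> ?w"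
          using D_assoc[of "?g (n + m)" ?d ?w] gD dD by simp
        finally show ?thesis .
      qed
      also have "?g n \<otimes> ?w \<oplus> (?g (n + m) \<otimes> ?d) \<otimes> ?w = hk k (Rm ?g) n"
        unfolding Rm_def hk_def using True gD dD by (simp add: l_distr)
      finally show ?thesis .
    qed (simp add: Rm_def hk_def)
  qed
  also have "\<dots> = hk k (p \<otimes>\<^bsub>SF\<^esub> q)" using Sf_mult[OF p q] by simp
  finally show ?thesis by simp
qed

lemma hk_iso: "na_iso SF SF (hk k)"
  unfolding na_iso_def using hk_bij hk_one hk_add hk_mult by simp

definition A :: "nat \<Rightarrow> 'a \<Rightarrow> 'a" where
  "A k = restrict (\<lambda>x. ev (hk k (phi x))) (carrier S)"

lemma A_iso: "na_iso S S (A k)"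
proof -
  have "na_iso S S (ev \<circ> (hk k \<circ> phi))"
    using na_iso_comp[OF na_iso_comp[OF phi_iso hk_iso] ev_iso] .
  then show ?thesis by (rule na_iso_cong) (auto simp: A_def)
qed

lemma A_aut: "A k \<in> na_aut S"
  unfolding na_aut_def using A_iso by (auto simp: A_def)

lemma A_D: "a \<in> D \<Longrightarrow> A k a = a"
proof -
  assume a: "a \<in> D"
  have "phi a = e0 a" using phi_ev[OF e0_sf[OF a]] ev_e0[OF a] by simp
  then show ?thesis unfolding A_def using a hk_e0 ev_e0 by simp
qed

lemma A_mod: "A k = A (k mod m)"
  unfolding A_def using hk_mod by metis

lemma A_pow: "x \<in> carrier S \<Longrightarrow> (A 1 ^^ k) x = ev (hk k (phi x))"
proof (induction k)
  case 0 then show ?case using hk_0 phi_in ev_phi by simp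
next
  case (Suc k)
  have in1: "hk k (phi x) \<in> sf_carrier S D m" using phi_in Suc by simp
  have "(A 1 ^^ Suc k) x = A 1 (ev (hk k (phi x)))" using Suc by simp
  also have "\<dots> = ev (hk 1 (hk k (phi x)))" unfolding A_def using in1 sf_D phi_ev by simp
  also have "\<dots> = ev (hk (Suc k) (phi x))" using hk_comp[OF phi_in[OF Suc.prems]] by simp
  finally show ?case .
qed

lemma A_pow_restrict: "restrict (A 1 ^^ k) (carrier S) = A (k mod m)"
proof
  fix x show "restrict (A 1 ^^ k) (carrier S) x = A (k mod m) x"
    using A_pow[of x k] hk_mod[of k] unfolding A_def by auto
qed

lemma A_T1: "1 < m \<Longrightarrow> A k (T 1) = W k \<otimes> T 1"
proof -
  assume m2: "1 < m"
  let ?e1 = "\<lambda>i. if i = 1 then \<one> else \<zero>"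
  have e1: "?e1 \<in> sf_carrier S D m" using m2 by (intro sf_carrierI) auto
  have "ev ?e1 = T 1" using ev_mono[OF m2, of \<one>] by simp
  then have "phi (T 1) = ?e1" using phi_ev[OF e1] by simp
  moreover have "hk k ?e1 = (\<lambda>i. if i = 1 then W k else \<zero>)" unfolding hk_def by auto
  ultimately show ?thesis unfolding A_def using ev_mono[OF m2, of "W k"] by simp
qed

lemma A_inj: "inj_on A {..<m}"
proof
  fix k l assume k: "k \<in> {..<m}" and l: "l \<in> {..<m}" and e: "A k = A l"
  show "k = l"
  proof (cases "1 < m")
    case True
    have "W k \<otimes> T 1 = W l \<otimes> T 1" using A_T1[OF True] e by metis
    then have "W k = W l" using mono_inj[OF True] by simp
    then show ?thesis using W_inj k l by auto
  next
    case False then show ?thesis using k l by auto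
  qed
qed

lemma cyclic_group:
  "\<exists>G. G \<subseteq> na_aut S \<and> finite G \<and> card G = m \<and>
        (\<exists>g\<in>G. G = {restrict (g ^^ k) (carrier S) | k. True}) \<and>
        (\<forall>H\<in>G. \<forall>a\<in>D. H a = a)"
proof (intro exI conjI)
  let ?G = "A ` {..<m}"
  show "?G \<subseteq> na_aut S" using A_aut by auto
  show "finite ?G" by simp
  show "card ?G = m" using card_image[OF A_inj] by simp
  show "\<forall>H\<in>?G. \<forall>a\<in>D. H a = a" using A_D by auto
  show "\<exists>g\<in>?G. ?G = {restrict (g ^^ k) (carrier S) | k. True}"
  proof (intro bexI)
    show "A 1 \<in> ?G" using A_mod[of 1] m_pos by (metis image_eqI lessThan_iff mod_less_divisor)
    show "?G = {restrict (A 1 ^^ k) (carrier S) | k. True}"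
    proof
      show "?G \<subseteq> {restrict (A 1 ^^ k) (carrier S) | k. True}"
      proof
        fix H assume "H \<in> ?G"
        then obtain k where k: "k < m" "H = A k" by auto
        then have "H = restrict (A 1 ^^ k) (carrier S)" using A_pow_restrict[of k] by simp
        then show "H \<in> {restrict (A 1 ^^ k) (carrier S) | k. True}" by blast
      qed
      show "{restrict (A 1 ^^ k) (carrier S) | k. True} \<subseteq> ?G"
        using A_pow_restrict m_pos by auto
    qed
  qed
qed

end


context NA begin

lemma F_finsum [intro]: "h \<in> A \<rightarrow> F \<Longrightarrow> (\<Oplus>i\<in>A. h i) \<in> F"
proof (induction A rule: infinite_finite_induct)
  case (insert a A)
  then have "h \<in> A \<rightarrow> carrier S" "h a \<in> carrier S" by auto
  with insert show ?case by (subst finsum_insert) auto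
qed auto

lemma neg_zero [simp]: "\<ominus> \<zero> = \<zero>"
  by (rule minus_equality) auto

lemma finsum_neg:
  assumes "h \<in> A \<rightarrow> carrier S"
  shows "(\<Oplus>i\<in>A. \<ominus> h i) = \<ominus> (\<Oplus>i\<in>A. h i)"
  using assms
proof (induction A rule: infinite_finite_induct)
  case (insert a A)
  then have fa: "h a \<in> carrier S" and fA: "h \<in> A \<rightarrow> carrier S" by auto
  have "(\<Oplus>i\<in>insert a A. \<ominus> h i) = \<ominus> h a \<oplus> (\<Oplus>i\<in>A. \<ominus> h i)"
    using insert fa fA by (subst finsum_insert) auto
  also have "\<dots> = \<ominus> h a \<oplus> \<ominus> (\<Oplus>i\<in>A. h i)" using insert fA by simp
  also have "\<dots> = \<ominus> (h a \<oplus> (\<Oplus>i\<in>A. h i))" using fa fA by (simp add: minus_add)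
  also have "\<dots> = \<ominus> (\<Oplus>i\<in>insert a A. h i)" using insert fa fA by (subst finsum_insert) auto
  finally show ?case .
qed (auto simp: neg_zero)

lemma sminus_eq: "x \<in> carrier S \<Longrightarrow> y \<in> carrier S \<Longrightarrow> z \<in> carrier S \<Longrightarrow> z \<oplus> y = x \<Longrightarrow> z = x \<ominus> y"
  by (metis a_minus_def add.inv_solve_right' add.inv_closed)

lemma lc_combine:
  assumes v: "v \<in> J \<rightarrow> carrier S" and a: "\<And>j. j \<in> J \<Longrightarrow> a j \<in> F" and b: "\<And>j. j \<in> J \<Longrightarrow> b j \<in> F"
    and l: "l \<in> F"
  shows "(\<Oplus>j\<in>J. v j \<otimes> a j) \<ominus> (\<Oplus>j\<in>J. v j \<otimes> b j) \<otimes> l = (\<Oplus>j\<in>J. v j \<otimes> (a j \<ominus> b j \<otimes> l))"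
proof -
  have vj: "\<And>j. j \<in> J \<Longrightarrow> v j \<in> carrier S" using v by auto
  have Fc: "\<And>c. c \<in> F \<Longrightarrow> c \<in> carrier S" by auto
  have 1: "(\<Oplus>j\<in>J. v j \<otimes> b j) \<otimes> l = (\<Oplus>j\<in>J. v j \<otimes> (b j \<otimes> l))"
  proof -
    have "(\<Oplus>j\<in>J. v j \<otimes> b j) \<otimes> l = (\<Oplus>j\<in>J. (v j \<otimes> b j) \<otimes> l)"
      using vj b l Fc by (subst finsum_rdistr) auto
    also have "\<dots> = (\<Oplus>j\<in>J. v j \<otimes> (b j \<otimes> l))"
      using vj b l Fc nucleus by (intro finsum_cong') auto
    finally show ?thesis .
  qed
  have 2: "(\<Oplus>j\<in>J. v j \<otimes> (a j \<ominus> b j \<otimes> l)) \<oplus> (\<Oplus>j\<in>J. v j \<otimes> (b j \<otimes> l)) = (\<Oplus>j\<in>J. v j \<otimes> a j)"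
  proof -
    have "(\<Oplus>j\<in>J. v j \<otimes> (a j \<ominus> b j \<otimes> l)) \<oplus> (\<Oplus>j\<in>J. v j \<otimes> (b j \<otimes> l))
        = (\<Oplus>j\<in>J. v j \<otimes> (a j \<ominus> b j \<otimes> l) \<oplus> v j \<otimes> (b j \<otimes> l))"
      using vj a b l Fc by (subst finsum_addf) auto
    also have "\<dots> = (\<Oplus>j\<in>J. v j \<otimes> a j)"
    proof (rule finsum_cong')
      fix j assume j: "j \<in> J"
      have "v j \<otimes> (a j \<ominus> b j \<otimes> l) \<oplus> v j \<otimes> (b j \<otimes> l) = v j \<otimes> ((a j \<ominus> b j \<otimes> l) \<oplus> b j \<otimes> l)"
        using r_distr vj a b l Fc j by simp
      also have "(a j \<ominus> b j \<otimes> l) \<oplus> b j \<otimes> l = a j" using a b l Fc j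
        by (simp add: a_minus_def a_assoc l_neg)
      finally show "v j \<otimes> (a j \<ominus> b j \<otimes> l) \<oplus> v j \<otimes> (b j \<otimes> l) = v j \<otimes> a j" .
    qed (use vj a Fc in auto)
    finally show ?thesis .
  qed
  show ?thesis unfolding 1 using 2 vj a b l Fc
    by (intro sminus_eq[symmetric]) (auto intro!: finsum_closed)
qed

definition span :: "'j set \<Rightarrow> ('j \<Rightarrow> 'a) \<Rightarrow> 'a set" where
  "span J v = {x. \<exists>a. (\<forall>j\<in>J. a j \<in> F) \<and> x = (\<Oplus>j\<in>J. v j \<otimes> a j)}"

lemma dep:
  assumes "finite J"
  shows "v \<in> J \<rightarrow> carrier S \<Longrightarrow> finite I \<Longrightarrow> card J < card I \<Longrightarrow> (\<forall>i\<in>I. ws i \<in> span J v) \<Longrightarrow>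
    \<exists>c. (\<forall>i\<in>I. c i \<in> F) \<and> (\<exists>i\<in>I. c i \<noteq> \<zero>) \<and> (\<Oplus>i\<in>I. ws i \<otimes> c i) = \<zero>"
  using assms
proof (induction J arbitrary: I ws rule: finite_induct)
  case empty
  then obtain i0 where "i0 \<in> I" by fastforce
  have "ws i = \<zero>" if "i \<in> I" for i using empty that unfolding span_def by auto
  then have "(\<Oplus>i\<in>I. ws i \<otimes> \<one>) = (\<Oplus>i\<in>I. \<zero>)" by (intro finsum_cong') auto
  then show ?case using \<open>i0 \<in> I\<close> by (intro exI[of _ "\<lambda>i. \<one>"]) (auto simp: finsum_zero)
next
  case (insert j0 J)
  have v: "v \<in> insert j0 J \<rightarrow> carrier S" using insert by simp
  have vJ: "v \<in> J \<rightarrow> carrier S" using v by auto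
  have vj: "\<And>j. j \<in> insert j0 J \<Longrightarrow> v j \<in> carrier S" using v by auto
  have Fc: "\<And>c. c \<in> F \<Longrightarrow> c \<in> carrier S" by auto
  have "\<forall>i\<in>I. \<exists>a. (\<forall>j\<in>insert j0 J. a j \<in> F) \<and> ws i = (\<Oplus>j\<in>insert j0 J. v j \<otimes> a j)"
    using insert.prems unfolding span_def by auto
  then obtain a where a: "\<And>i j. i \<in> I \<Longrightarrow> j \<in> insert j0 J \<Longrightarrow> a i j \<in> F"
    and wsa: "\<And>i. i \<in> I \<Longrightarrow> ws i = (\<Oplus>j\<in>insert j0 J. v j \<otimes> a i j)"
    by metis
  have split: "(\<Oplus>j\<in>insert j0 J. v j \<otimes> b j) = v j0 \<otimes> b j0 \<oplus> (\<Oplus>j\<in>J. v j \<otimes> b j)"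
    if "\<And>j. j \<in> insert j0 J \<Longrightarrow> b j \<in> F" for b
    using insert vj that Fc by (subst finsum_insert) auto
  have wsc: "\<And>i. i \<in> I \<Longrightarrow> ws i \<in> carrier S"
    using wsa a vj Fc by (auto intro!: finsum_closed)
  show ?case
  proof (cases "\<forall>i\<in>I. a i j0 = \<zero>")
    case True
    have "ws i \<in> span J v" if i: "i \<in> I" for i
    proof -
      have "ws i = (\<Oplus>j\<in>J. v j \<otimes> a i j)"
        using wsa[OF i] split[of "a i"] a[OF i] True i vj by (auto intro!: finsum_closed)
      then show ?thesis unfolding span_def using a[OF i] by auto
    qed
    then have "\<forall>i\<in>I. ws i \<in> span J v" by blast
    moreover have "card J < card I" using insert by simp
    ultimately show ?thesis using insert.IH[OF vJ] insert.prems(2) by blast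
  next
    case False
    then obtain k where k: "k \<in> I" "a k j0 \<noteq> \<zero>" by auto
    obtain ik where ik: "ik \<in> F" "a k j0 \<otimes> ik = \<one>" using F_inv[of "a k j0"] a k by auto
    define lam where "lam i = a i j0 \<otimes> ik" for i
    have lamF: "\<And>i. i \<in> I \<Longrightarrow> lam i \<in> F" unfolding lam_def using a ik by auto
    define b where "b i j = a i j \<ominus> a k j \<otimes> lam i" for i j
    have bF: "\<And>i j. i \<in> I \<Longrightarrow> j \<in> insert j0 J \<Longrightarrow> b i j \<in> F"
      unfolding b_def using a lamF k by auto
    have b0: "b i j0 = \<zero>" if i: "i \<in> I" for i
    proof -
      have aF: "a i j0 \<in> F" "a k j0 \<in> F" using a i k by auto
      have "a k j0 \<otimes> lam i = (a k j0 \<otimes> a i j0) \<otimes> ik"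
        unfolding lam_def using D_assoc[of "a k j0" "a i j0" ik] aF ik by auto
      also have "\<dots> = (a i j0 \<otimes> a k j0) \<otimes> ik" using F_comm2 aF by auto
      also have "\<dots> = a i j0" using D_assoc[of "a i j0" "a k j0" ik] aF ik by auto
      finally show ?thesis unfolding b_def using aF by (simp add: a_minus_def r_neg)
    qed
    define ws' where "ws' i = ws i \<ominus> ws k \<otimes> lam i" for i
    have ws'span: "ws' i \<in> span J v" if i: "i \<in> I - {k}" for i
    proof -
      have "ws' i = (\<Oplus>j\<in>insert j0 J. v j \<otimes> b i j)"
        unfolding ws'_def b_def wsa[OF k(1)] using i wsa[of i] lc_combine[OF v, of "a i" "a k" "lam i"] a k lamF
        by auto
      also have "\<dots> = (\<Oplus>j\<in>J. v j \<otimes> b i j)"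
        using split[of "b i"] bF b0 i vj by (auto intro!: finsum_closed)
      finally show ?thesis unfolding span_def using bF i by auto
    qed
    have fin': "finite (I - {k})" using insert.prems by auto
    have card': "card J < card (I - {k})" using insert.prems insert.hyps k by auto
    obtain c' where c'F: "\<forall>i\<in>I - {k}. c' i \<in> F" and c'nz: "\<exists>i\<in>I - {k}. c' i \<noteq> \<zero>"
      and c'sum: "(\<Oplus>i\<in>I - {k}. ws' i \<otimes> c' i) = \<zero>"
      using insert.IH[OF vJ fin' card'] ws'span by blast
    define s where "s = (\<Oplus>i\<in>I - {k}. lam i \<otimes> c' i)"
    have sF: "s \<in> F" unfolding s_def by (rule F_finsum) (use lamF c'F in auto)
    define c where "c i = (if i = k then \<ominus> s else c' i)" for i
    have X: "(\<Oplus>i\<in>I - {k}. ws i \<otimes> c' i) \<oplus> \<ominus> (ws k \<otimes> s) = \<zero>"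
    proof -
      have "(\<Oplus>i\<in>I - {k}. ws' i \<otimes> c' i) = (\<Oplus>i\<in>I - {k}. ws i \<otimes> c' i \<oplus> \<ominus> (ws k \<otimes> (lam i \<otimes> c' i)))"
      proof (rule finsum_cong')
        fix i assume i: "i \<in> I - {k}"
        have c: "ws i \<in> carrier S" "ws k \<in> carrier S" "lam i \<in> carrier S" "c' i \<in> carrier S"
          using wsc lamF c'F i k Fc by auto
        have "ws' i \<otimes> c' i = ws i \<otimes> c' i \<oplus> (\<ominus> (ws k \<otimes> lam i)) \<otimes> c' i"
          unfolding ws'_def a_minus_def using c by (simp add: l_distr)
        also have "(\<ominus> (ws k \<otimes> lam i)) \<otimes> c' i = \<ominus> (ws k \<otimes> (lam i \<otimes> c' i))"
          using c l_minus nucleus[of "ws k" "lam i" "c' i"] c'F i by simp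
        finally show "ws' i \<otimes> c' i = ws i \<otimes> c' i \<oplus> \<ominus> (ws k \<otimes> (lam i \<otimes> c' i))" .
      qed (use wsc lamF c'F k Fc in auto)
      also have "\<dots> = (\<Oplus>i\<in>I - {k}. ws i \<otimes> c' i) \<oplus> (\<Oplus>i\<in>I - {k}. \<ominus> (ws k \<otimes> (lam i \<otimes> c' i)))"
        using wsc lamF c'F k Fc by (subst finsum_addf) auto
      also have "(\<Oplus>i\<in>I - {k}. \<ominus> (ws k \<otimes> (lam i \<otimes> c' i))) = \<ominus> (\<Oplus>i\<in>I - {k}. ws k \<otimes> (lam i \<otimes> c' i))"
        using wsc lamF c'F k Fc by (subst finsum_neg) auto
      also have "(\<Oplus>i\<in>I - {k}. ws k \<otimes> (lam i \<otimes> c' i)) = ws k \<otimes> s"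
        unfolding s_def using wsc lamF c'F k Fc by (subst finsum_ldistr) auto
      finally show ?thesis using c'sum by simp
    qed
    have "(\<Oplus>i\<in>I. ws i \<otimes> c i) = ws k \<otimes> c k \<oplus> (\<Oplus>i\<in>I - {k}. ws i \<otimes> c i)"
    proof -
      have "I = insert k (I - {k})" using k by auto
      then have "(\<Oplus>i\<in>I. ws i \<otimes> c i) = (\<Oplus>i\<in>insert k (I - {k}). ws i \<otimes> c i)" by simp
      also have "\<dots> = ws k \<otimes> c k \<oplus> (\<Oplus>i\<in>I - {k}. ws i \<otimes> c i)"
        using fin' wsc c'F sF k Fc by (subst finsum_insert) (auto simp: c_def)
      finally show ?thesis .
    qed
    also have "(\<Oplus>i\<in>I - {k}. ws i \<otimes> c i) = (\<Oplus>i\<in>I - {k}. ws i \<otimes> c' i)"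
      using wsc c'F Fc by (intro finsum_cong') (auto simp: c_def)
    also have "ws k \<otimes> c k = \<ominus> (ws k \<otimes> s)" using r_minus wsc k sF Fc by (simp add: c_def)
    also have "\<ominus> (ws k \<otimes> s) \<oplus> (\<Oplus>i\<in>I - {k}. ws i \<otimes> c' i) = \<zero>"
      using X wsc k sF Fc c'F by (subst a_comm) (auto intro!: finsum_closed)
    finally have "(\<Oplus>i\<in>I. ws i \<otimes> c i) = \<zero>" .
    moreover have "\<forall>i\<in>I. c i \<in> F" using c'F sF by (auto simp: c_def)
    moreover have "\<exists>i\<in>I. c i \<noteq> \<zero>" using c'nz by (auto simp: c_def)
    ultimately show ?thesis by blast
  qed
qed

end


context NA begin

lemma inj_surj:
  assumes J: "finite J" and v: "v \<in> J \<rightarrow> carrier S" and sp: "carrier S \<subseteq> span J v"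
    and L: "\<And>x. x \<in> carrier S \<Longrightarrow> L x \<in> carrier S"
    and Ladd: "\<And>x y. x \<in> carrier S \<Longrightarrow> y \<in> carrier S \<Longrightarrow> L (x \<oplus> y) = L x \<oplus> L y"
    and Llin: "\<And>x c. x \<in> carrier S \<Longrightarrow> c \<in> F \<Longrightarrow> L (x \<otimes> c) = L x \<otimes> c"
    and inj: "inj_on L (carrier S)" and y: "y \<in> carrier S"
  shows "\<exists>x\<in>carrier S. L x = y"
proof -
  have Fc: "\<And>c. c \<in> F \<Longrightarrow> c \<in> carrier S" by auto
  have Lk: "\<And>x. x \<in> carrier S \<Longrightarrow> (L ^^ k) x \<in> carrier S" for k
    by (induction k) (auto simp: L)
  have L0: "L \<zero> = \<zero>"
  proof -
    have "L \<zero> \<oplus> L \<zero> = \<zero> \<oplus> L \<zero>" using Ladd[of \<zero> \<zero>] L by simp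
    then show ?thesis using L add.right_cancel by (meson zero_closed)
  qed
  have Lk0: "(L ^^ k) \<zero> = \<zero>" for k by (induction k) (auto simp: L0)
  have Lkadd: "\<And>x y. x \<in> carrier S \<Longrightarrow> y \<in> carrier S \<Longrightarrow> (L ^^ k) (x \<oplus> y) = (L ^^ k) x \<oplus> (L ^^ k) y" for k
    by (induction k) (auto simp: Ladd Lk)
  have Lklin: "\<And>x c. x \<in> carrier S \<Longrightarrow> c \<in> F \<Longrightarrow> (L ^^ k) (x \<otimes> c) = (L ^^ k) x \<otimes> c" for k
    by (induction k) (auto simp: Llin Lk)
  have Lkinj: "\<And>x y. x \<in> carrier S \<Longrightarrow> y \<in> carrier S \<Longrightarrow> (L ^^ k) x = (L ^^ k) y \<Longrightarrow> x = y" for k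
  proof (induction k)
    case (Suc k)
    then have "(L ^^ k) x = (L ^^ k) y" using inj Lk by (auto dest: inj_onD)
    then show ?case using Suc by blast
  qed simp
  have Lkneg: "\<And>x. x \<in> carrier S \<Longrightarrow> L (\<ominus> x) = \<ominus> L x"
  proof -
    fix x assume x: "x \<in> carrier S"
    have "L (\<ominus> x) \<oplus> L x = \<zero>" using Ladd[of "\<ominus> x" x] x L0 by (simp add: l_neg)
    then have "\<ominus> L x = L (\<ominus> x)" by (rule add.inv_equality) (use L x in auto)
    then show "L (\<ominus> x) = \<ominus> L x" by simp
  qed
  have Lkfin: "g \<in> A \<rightarrow> carrier S \<Longrightarrow> (L ^^ k) (\<Oplus>i\<in>A. g i) = (\<Oplus>i\<in>A. (L ^^ k) (g i))" for g A k
  proof (induction A rule: infinite_finite_induct)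
    case (infinite A) then show ?case using Lk0 by simp
  next
    case empty then show ?case using Lk0 by simp
  next
    case (insert a A)
    then have ga: "g a \<in> carrier S" and gA: "g \<in> A \<rightarrow> carrier S" by auto
    have "(L ^^ k) (\<Oplus>i\<in>insert a A. g i) = (L ^^ k) (g a \<oplus> (\<Oplus>i\<in>A. g i))"
      using insert ga gA by (subst finsum_insert) auto
    also have "\<dots> = (L ^^ k) (g a) \<oplus> (\<Oplus>i\<in>A. (L ^^ k) (g i))"
      using Lkadd ga gA insert by (simp add: finsum_closed)
    also have "\<dots> = (\<Oplus>i\<in>insert a A. (L ^^ k) (g i))"
      using insert ga gA Lk by (subst finsum_insert) (auto simp: Pi_def)
    finally show ?case .
  qed
  define N where "N = card J"
  have ws: "\<forall>i\<in>{..N}. (L ^^ i) y \<in> span J v" using sp Lk y by auto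
  obtain c where cF: "\<forall>i\<in>{..N}. c i \<in> F" and cnz: "\<exists>i\<in>{..N}. c i \<noteq> \<zero>"
    and csum: "(\<Oplus>i\<in>{..N}. (L ^^ i) y \<otimes> c i) = \<zero>"
    using dep[OF J v _ _ ws] N_def by auto
  obtain k0 where k0: "k0 \<le> N" "c k0 \<noteq> \<zero>" and below: "\<And>i. i < k0 \<Longrightarrow> \<not> (i \<le> N \<and> c i \<noteq> \<zero>)"
    using cnz exists_least_iff[of "\<lambda>i. i \<le> N \<and> c i \<noteq> \<zero>"] by auto
  have ck: "\<And>i. i \<in> {k0..N} \<Longrightarrow> c i \<in> F" using cF by auto
  define z where "z = (\<Oplus>i\<in>{k0..N}. (L ^^ (i - k0)) y \<otimes> c i)"
  have zc: "z \<in> carrier S" unfolding z_def using Lk y ck Fc by (auto intro!: finsum_closed)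
  have "(L ^^ k0) z = (\<Oplus>i\<in>{k0..N}. (L ^^ k0) ((L ^^ (i - k0)) y \<otimes> c i))"
    unfolding z_def using Lk y ck Fc by (subst Lkfin) auto
  also have "\<dots> = (\<Oplus>i\<in>{k0..N}. (L ^^ i) y \<otimes> c i)"
  proof (rule finsum_cong')
    fix i assume i: "i \<in> {k0..N}"
    have "(L ^^ k0) ((L ^^ (i - k0)) y) = (L ^^ i) y"
      using i funpow_add[of k0 "i - k0" L] by (simp add: comp_def)
    then show "(L ^^ k0) ((L ^^ (i - k0)) y \<otimes> c i) = (L ^^ i) y \<otimes> c i"
      using Lklin[of "(L ^^ (i - k0)) y" "c i" k0] Lk y ck i by simp
  qed (use Lk y ck Fc in auto)
  also have "\<dots> = (\<Oplus>i\<in>{..N}. (L ^^ i) y \<otimes> c i)"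
  proof (rule add.finprod_mono_neutral_cong_left)
    show "\<And>i. i \<in> {..N} - {k0..N} \<Longrightarrow> (L ^^ i) y \<otimes> c i = \<zero>"
      using below Lk y by auto
  qed (use Lk y cF Fc in auto)
  also have "\<dots> = \<zero>" using csum .
  finally have "(L ^^ k0) z = (L ^^ k0) \<zero>" using Lk0 by simp
  then have z0: "z = \<zero>" using Lkinj zc by blast
  define w where "w = (\<Oplus>i\<in>{Suc k0..N}. (L ^^ (i - Suc k0)) y \<otimes> c i)"
  have wc: "w \<in> carrier S" unfolding w_def using Lk y cF Fc by (auto intro!: finsum_closed)
  have "z = y \<otimes> c k0 \<oplus> (\<Oplus>i\<in>{Suc k0..N}. (L ^^ (i - k0)) y \<otimes> c i)"
  proof -
    have "{k0..N} = insert k0 {Suc k0..N}" using k0 by auto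
    then show ?thesis unfolding z_def using Lk y cF Fc k0 by (simp add: finsum_insert Pi_def)
  qed
  also have "(\<Oplus>i\<in>{Suc k0..N}. (L ^^ (i - k0)) y \<otimes> c i) = L w"
  proof -
    have gin: "(\<lambda>i. (L ^^ (i - Suc k0)) y \<otimes> c i) \<in> {Suc k0..N} \<rightarrow> carrier S" using Lk y cF Fc by auto
    have "L w = (\<Oplus>i\<in>{Suc k0..N}. (L ^^ 1) ((L ^^ (i - Suc k0)) y \<otimes> c i))"
      unfolding w_def using Lkfin[OF gin, of 1] by simp
    also have "\<dots> = (\<Oplus>i\<in>{Suc k0..N}. (L ^^ (i - k0)) y \<otimes> c i)"
    proof (rule finsum_cong')
      fix i assume i: "i \<in> {Suc k0..N}"
      then have "i - k0 = Suc (i - Suc k0)" by auto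
      then show "(L ^^ 1) ((L ^^ (i - Suc k0)) y \<otimes> c i) = (L ^^ (i - k0)) y \<otimes> c i"
        using Llin[of "(L ^^ (i - Suc k0)) y" "c i"] Lk y cF i by simp
    qed (use Lk y cF Fc in auto)
    finally show ?thesis by simp
  qed
  finally have e1: "y \<otimes> c k0 \<oplus> L w = \<zero>" using z0 by simp
  have ck0F: "c k0 \<in> F" using cF k0 by auto
  obtain e where e: "e \<in> F" "c k0 \<otimes> e = \<one>" using F_inv[OF ck0F k0(2)] by auto
  have "\<ominus> L w = y \<otimes> c k0" by (rule add.inv_equality[OF e1]) (use y ck0F Fc L wc in auto)
  then have yck: "y \<otimes> c k0 = \<ominus> L w" by simp
  have "y = y \<otimes> (c k0 \<otimes> e)" using e y by simp
  also have "\<dots> = (y \<otimes> c k0) \<otimes> e" using nucleus[of y "c k0" e] y ck0F Fc e by simp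
  also have "\<dots> = \<ominus> (L w \<otimes> e)" using yck l_minus L wc e Fc by simp
  also have "\<dots> = L (\<ominus> (w \<otimes> e))" using Lkneg Llin wc e Fc by simp
  finally show ?thesis using wc e Fc by (intro bexI[of _ "\<ominus> (w \<otimes> e)"]) auto
qed

lemma span_zero: "finite J \<Longrightarrow> v \<in> J \<rightarrow> carrier S \<Longrightarrow> \<zero> \<in> span J v"
proof -
  assume "v \<in> J \<rightarrow> carrier S"
  then have vj: "\<And>j. j \<in> J \<Longrightarrow> v j \<in> carrier S" by auto
  have "(\<Oplus>j\<in>J. v j \<otimes> \<zero>) = (\<Oplus>j\<in>J. \<zero>)" using vj by (intro finsum_cong') auto
  then have "\<zero> = (\<Oplus>j\<in>J. v j \<otimes> \<zero>)" by (simp add: finsum_zero)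
  then show ?thesis unfolding span_def by auto
qed

lemma span_closed: "v \<in> J \<rightarrow> carrier S \<Longrightarrow> x \<in> span J v \<Longrightarrow> x \<in> carrier S"
  unfolding span_def by (auto intro!: finsum_closed)

lemma span_add:
  assumes v: "v \<in> J \<rightarrow> carrier S" and x: "x \<in> span J v" and y: "y \<in> span J v"
  shows "x \<oplus> y \<in> span J v"
proof -
  obtain a where a: "\<forall>j\<in>J. a j \<in> F" "x = (\<Oplus>j\<in>J. v j \<otimes> a j)" using x unfolding span_def by auto
  obtain b where b: "\<forall>j\<in>J. b j \<in> F" "y = (\<Oplus>j\<in>J. v j \<otimes> b j)" using y unfolding span_def by auto
  have Fc: "\<And>c. c \<in> F \<Longrightarrow> c \<in> carrier S" by auto
  have vj: "\<And>j. j \<in> J \<Longrightarrow> v j \<in> carrier S" using v by auto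
  have "x \<oplus> y = (\<Oplus>j\<in>J. v j \<otimes> a j \<oplus> v j \<otimes> b j)"
    unfolding a b using v a b Fc by (subst finsum_addf) auto
  also have "\<dots> = (\<Oplus>j\<in>J. v j \<otimes> (a j \<oplus> b j))"
    using vj a b Fc by (intro finsum_cong') (auto simp: r_distr)
  finally show ?thesis unfolding span_def using a b by (intro CollectI exI[of _ "\<lambda>j. a j \<oplus> b j"]) auto
qed

lemma span_gen:
  assumes J: "finite J" and v: "v \<in> J \<rightarrow> carrier S" and j: "j \<in> J" and c: "c \<in> F"
  shows "v j \<otimes> c \<in> span J v"
proof -
  have Fc: "\<And>c. c \<in> F \<Longrightarrow> c \<in> carrier S" by auto
  have vj: "\<And>j. j \<in> J \<Longrightarrow> v j \<in> carrier S" using v by auto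
  have "(\<Oplus>j'\<in>J. v j' \<otimes> (if j' = j then c else \<zero>)) = (\<Oplus>j'\<in>J. if j' = j then v j \<otimes> c else \<zero>)"
    using vj c Fc j by (intro finsum_cong') auto
  also have "\<dots> = v j \<otimes> c" using J j vj c Fc by (intro finsum_if_eq) auto
  finally show ?thesis unfolding span_def using c
    by (intro CollectI exI[of _ "\<lambda>j'. if j' = j then c else \<zero>"]) auto
qed

lemma span_finsum:
  assumes J: "finite J" and v: "v \<in> J \<rightarrow> carrier S"
  shows "g \<in> A \<rightarrow> span J v \<Longrightarrow> (\<Oplus>i\<in>A. g i) \<in> span J v"
proof (induction A rule: infinite_finite_induct)
  case (infinite A) then show ?case using span_zero J v by simp
next
  case empty then show ?case using span_zero J v by simp
next
  case (insert a A)
  have "g \<in> A \<rightarrow> carrier S" "g a \<in> carrier S" using insert span_closed[OF v] by auto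
  then show ?case using insert span_add[OF v] by (subst finsum_insert) auto
qed

lemma S_span:
  assumes csa: "central_simple S D"
  shows "\<exists>J (v :: nat \<times> 'a \<Rightarrow> 'a). finite J \<and> v \<in> J \<rightarrow> carrier S \<and> carrier S \<subseteq> span J v"
proof -
  obtain B where B: "finite B" "B \<subseteq> D"
    and Bsp: "\<And>x. x \<in> D \<Longrightarrow> \<exists>c. (\<forall>b\<in>B. c b \<in> F) \<and> x = (\<Oplus>b\<in>B. c b \<otimes> b)"
    using csa unfolding central_simple_def by metis
  define J where "J = {..<m} \<times> B"
  define v where "v = (\<lambda>(i, b). b \<otimes> T i)"
  have J: "finite J" unfolding J_def using B by auto
  have v: "v \<in> J \<rightarrow> carrier S" unfolding J_def v_def using B by auto
  have vin: "\<And>i b. b \<in> B \<Longrightarrow> v (i, b) \<in> carrier S" unfolding v_def using B by auto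
  have key: "(c \<otimes> b) \<otimes> T i = v (i, b) \<otimes> (\<sigma> ^^ (m - i)) c"
    if b: "b \<in> D" and c: "c \<in> F" and i: "i < m" for b c i
  proof -
    let ?c = "(\<sigma> ^^ (m - i)) c"
    have cD: "c \<in> D" "?c \<in> D" using c by auto
    have "(\<sigma> ^^ i) ?c = c" using sigk_comp[of i "m - i" c] sigk_m cD i by simp
    then have "(b \<otimes> T i) \<otimes> (?c \<otimes> T 0) = (b \<otimes> c) \<otimes> T i"
      using mono_mult[OF b cD(2) i m_pos] i by simp
    then show ?thesis unfolding v_def using F_comm[OF c b] cD by simp
  qed
  have "x \<in> span J v" if x: "x \<in> carrier S" for x
  proof -
    obtain p where p: "\<forall>i. p i \<in> D" "x = ev p" using coef_exists[OF x] by blast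
    have "p i \<otimes> T i \<in> span J v" if i: "i \<in> {..<m}" for i
    proof -
      obtain c where c: "\<forall>b\<in>B. c b \<in> F" "p i = (\<Oplus>b\<in>B. c b \<otimes> b)" using Bsp p by blast
      have "p i \<otimes> T i = (\<Oplus>b\<in>B. (c b \<otimes> b) \<otimes> T i)"
        unfolding c(2) using c B by (subst finsum_rdistr) auto
      also have "\<dots> = (\<Oplus>b\<in>B. v (i, b) \<otimes> (\<sigma> ^^ (m - i)) (c b))"
        using key c B i vin by (intro finsum_cong') auto
      also have "\<dots> \<in> span J v"
      proof (intro span_finsum[OF J v] funcsetI)
        fix b assume b: "b \<in> B"
        then have "(i, b) \<in> J" using i unfolding J_def by auto
        then show "v (i, b) \<otimes> (\<sigma> ^^ (m - i)) (c b) \<in> span J v"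
          using span_gen[OF J v] c b by auto
      qed
      finally show ?thesis .
    qed
    then show ?thesis unfolding p(2) ev_def by (intro span_finsum[OF J v]) auto
  qed
  then have "carrier S \<subseteq> span J v" by blast
  then show ?thesis using J v by (intro exI[of _ J] exI[of _ v]) simp
qed

end



context NA2 begin

lemma ldiv:
  assumes csa: "central_simple S D" and a: "a \<in> carrier S" "a \<noteq> \<zero>"
  shows "bij_betw (\<lambda>x. a \<otimes> x) (carrier S) (carrier S)"
proof -
  obtain J :: "(nat \<times> 'a) set" and v :: "nat \<times> 'a \<Rightarrow> 'a" where J: "finite J" and v: "v \<in> J \<rightarrow> carrier S" and sp: "carrier S \<subseteq> span J v"
    using S_span[OF csa] by blast
  have inj: "inj_on (\<lambda>x. a \<otimes> x) (carrier S)"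
  proof
    fix x y assume x: "x \<in> carrier S" and y: "y \<in> carrier S" and e: "a \<otimes> x = a \<otimes> y"
    have "a \<otimes> (x \<ominus> y) = a \<otimes> x \<oplus> a \<otimes> (\<ominus> y)"
      unfolding a_minus_def using r_distr[of x "\<ominus> y" a] x y a by simp
    also have "a \<otimes> (\<ominus> y) = \<ominus> (a \<otimes> y)" using r_minus[of a y] a y by simp
    also have "a \<otimes> x \<oplus> \<ominus> (a \<otimes> y) = \<zero>" unfolding e using a y by (simp add: r_neg)
    finally have "a \<otimes> (x \<ominus> y) = \<zero>" .
    then have "x \<ominus> y = \<zero>" using rmult_inj[of "x \<ominus> y" a] x y a by (cases "x \<ominus> y = \<zero>") simp_all
    then show "x = y" using minus_eq0 x y by auto
  qed
  have Lin: "\<And>x. x \<in> carrier S \<Longrightarrow> a \<otimes> x \<in> carrier S" using a by simp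
  have Ladd: "\<And>x y. x \<in> carrier S \<Longrightarrow> y \<in> carrier S \<Longrightarrow> a \<otimes> (x \<oplus> y) = a \<otimes> x \<oplus> a \<otimes> y"
    using r_distr a by simp
  have Llin: "\<And>x c. x \<in> carrier S \<Longrightarrow> c \<in> F \<Longrightarrow> a \<otimes> (x \<otimes> c) = (a \<otimes> x) \<otimes> c"
  proof -
    fix x c assume "x \<in> carrier S" "c \<in> F"
    then show "a \<otimes> (x \<otimes> c) = (a \<otimes> x) \<otimes> c" using nucleus[of a x c] a by simp
  qed
  have surj: "\<exists>x\<in>carrier S. a \<otimes> x = y" if y: "y \<in> carrier S" for y
    using inj_surj[OF J v sp, of "\<lambda>x. a \<otimes> x", OF Lin Ladd Llin inj y] by simp
  have "(\<lambda>x. a \<otimes> x) ` carrier S = carrier S"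
  proof
    show "(\<lambda>x. a \<otimes> x) ` carrier S \<subseteq> carrier S" using Lin by blast
    show "carrier S \<subseteq> (\<lambda>x. a \<otimes> x) ` carrier S"
    proof
      fix y assume "y \<in> carrier S"
      then obtain x where "x \<in> carrier S" "a \<otimes> x = y" using surj by blast
      then show "y \<in> (\<lambda>x. a \<otimes> x) ` carrier S" by blast
    qed
  qed
  then show ?thesis unfolding bij_betw_def using inj by simp
qed

end

theorem theorem4p3:
  fixes S :: "'a ring" and D :: "'a set" and m :: nat and t d \<omega> :: 'a
    and \<sigma> :: "'a \<Rightarrow> 'a"
  assumes ring: "nonassoc_ring S"
    and subring: "assoc_division_subring S D"
    and free: "free_left_module S D m"
    and t_in: "t \<in> carrier S"
    and h1: "left_basis S D (npow S t) m"
    and h2: "\<forall>a\<in>D. a \<noteq> \<zero>\<^bsub>S\<^esub> \<longrightarrow> (\<exists>a'\<in>D. a' \<noteq> \<zero>\<^bsub>S\<^esub> \<and> t \<otimes>\<^bsub>S\<^esub> a = a' \<otimes>\<^bsub>S\<^esub> t)"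
    and h3: "\<forall>a\<in>D. \<forall>b\<in>D. \<forall>c\<in>D. \<forall>i j k. i + j < m \<and> k < m \<longrightarrow>
               associator S (a \<otimes>\<^bsub>S\<^esub> npow S t i) (b \<otimes>\<^bsub>S\<^esub> npow S t j) (c \<otimes>\<^bsub>S\<^esub> npow S t k)
                 = \<zero>\<^bsub>S\<^esub>"
    and h4: "d \<in> D" "npow S t m = d"
    and sigma_map: "\<forall>a\<in>D. \<sigma> a \<in> D" "\<sigma> \<zero>\<^bsub>S\<^esub> = \<zero>\<^bsub>S\<^esub>"
    and sigma_def: "\<forall>a\<in>D. a \<noteq> \<zero>\<^bsub>S\<^esub> \<longrightarrow> \<sigma> a \<noteq> \<zero>\<^bsub>S\<^esub> \<and> t \<otimes>\<^bsub>S\<^esub> a = \<sigma> a \<otimes>\<^bsub>S\<^esub> t"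
    and sigma_order: "\<forall>a\<in>D. (\<sigma> ^^ m) a = a"
      "\<forall>k. 0 < k \<and> k < m \<longrightarrow> \<not> (\<forall>a\<in>D. (\<sigma> ^^ k) a = a)"
    and sigma_fix: "{a \<in> D. \<sigma> a = a} = {a \<in> D. t \<otimes>\<^bsub>S\<^esub> a = a \<otimes>\<^bsub>S\<^esub> t}"
    and csa: "central_simple S D"
    and omega: "\<omega> \<in> center_of S D" "\<sigma> \<omega> = \<omega>"
      "npow S \<omega> m = \<one>\<^bsub>S\<^esub>" "\<forall>k. 0 < k \<and> k < m \<longrightarrow> npow S \<omega> k \<noteq> \<one>\<^bsub>S\<^esub>"
  shows "(\<exists>\<phi>. na_iso S (Sf S D \<sigma> d m) \<phi>) \<and>
         (right_division_ring S \<longrightarrow>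
            tp_irreducible S D \<sigma> (tp_f S m d) \<and> nonassoc_cyclic_ext S D m)"
proof -
  interpret NA S D m t d \<sigma>
    by (rule NA.intro) (use ring subring free t_in h1 h3 h4 sigma_map sigma_def sigma_order in auto)
  have P1: "\<exists>\<phi>. na_iso S (Sf S D \<sigma> d m) \<phi>" using part1 .
  have P2: "right_division_ring S \<longrightarrow> tp_irreducible S D \<sigma> (tp_f S m d) \<and> nonassoc_cyclic_ext S D m"
  proof
    assume rd: "right_division_ring S"
    interpret NA2 S D m t d \<sigma> by unfold_locales (rule rd)
    interpret NAW S D m t d \<sigma> \<omega> by unfold_locales (use omega in auto)
    have lb: "\<forall>a\<in>carrier S. a \<noteq> \<zero>\<^bsub>S\<^esub> \<longrightarrow> bij_betw (\<lambda>x. a \<otimes>\<^bsub>S\<^esub> x) (carrier S) (carrier S)"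
      using ldiv[OF csa] by blast
    have "nonassoc_division_ring S" unfolding nonassoc_division_ring_def
      using ring rd lb unfolding right_division_ring_def by auto
    then show "tp_irreducible S D \<sigma> (tp_f S m d) \<and> nonassoc_cyclic_ext S D m"
      using f_irred cyclic_group subring free unfolding nonassoc_cyclic_ext_def by auto
  qed
  show ?thesis using P1 P2 by blast
qed

end
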